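(* The ideal $\mathfrak{a}_n=\mathfrak{p}_1+\cdots+\mathfrak{p}_n$ is the only nonzero prime ideal $\mathfrak{p}$ of $\mathbb{S}_n$ such that $\sigma(\mathfrak{p})=\mathfrak{p}$ for all $\sigma\in G_n$.
   Context: $K$ is a field of characteristic zero. $\mathbb{S}_n$ is the $K$-algebra generated by $x_1,\dots,x_n,y_1,\dots,y_n$ with defining relations $y_ix_i=1$ and $[x_i,y_j]=[x_i,x_j]=[y_i,y_j]=0$ for $i\ne j$; $G_n=\mathrm{Aut}_{K\text{-alg}}(\mathbb{S}_n)$. For $k,l\in\mathbb{N}$, $E_{kl}(i):=x_i^ky_i^l-x_i^{k+1}y_i^{l+1}$, $F(i):=\bigoplus_{k,l}KE_{kl}(i)$, and $\mathfrak{p}_i:=F(i)\otimes\bigotimes_{j\ne i}\mathbb{S}_1(j)\subset\mathbb{S}_n=\bigotimes_j\mathbb{S}_1(j)$ (the ideal generated by $1-x_iy_i$). *)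

theory Defs
  imports Main
begin

text \<open>By the defining relations, the
words x^alpha y^beta (alpha, beta multi-indices supported in {0..<n}) form a K-basis,
and S_n is the semigroup algebra of the n-th power of the bicyclic monoid
(x^a y^b)(x^c y^d) = x^(a+c-min b c) y^(b+d-min b c), coordinatewise.
Variables are indexed 0..n-1. Elements are finitely supported coefficient functions.\<close>

type_synonym mono = "(nat \<Rightarrow> nat) \<times> (nat \<Rightarrow> nat)"

definition bmul :: "mono \<Rightarrow> mono \<Rightarrow> mono" where
  "bmul p q = ((\<lambda>i. fst p i + fst q i - min (snd p i) (fst q i)),
               (\<lambda>i. snd p i + snd q i - min (snd p i) (fst q i)))"

definition valid_monos :: "nat \<Rightarrow> mono set" where
  "valid_monos n = {(a, b). \<forall>i\<ge>n. a i = 0 \<and> b i = 0}"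

definition Sn :: "nat \<Rightarrow> (mono \<Rightarrow> 'k::field) set" where
  "Sn n = {f. finite {m. f m \<noteq> 0} \<and> (\<forall>m. f m \<noteq> 0 \<longrightarrow> m \<in> valid_monos n)}"

definition sadd :: "(mono \<Rightarrow> 'k::field) \<Rightarrow> (mono \<Rightarrow> 'k) \<Rightarrow> (mono \<Rightarrow> 'k)" where
  "sadd f g = (\<lambda>m. f m + g m)"

definition sneg :: "(mono \<Rightarrow> 'k::field) \<Rightarrow> (mono \<Rightarrow> 'k)" where
  "sneg f = (\<lambda>m. - f m)"

definition szero :: "mono \<Rightarrow> 'k::field" where
  "szero = (\<lambda>m. 0)"

definition sone :: "mono \<Rightarrow> 'k::field" where
  "sone = (\<lambda>m. if m = ((\<lambda>i. 0), (\<lambda>i. 0)) then 1 else 0)"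

definition sscale :: "'k::field \<Rightarrow> (mono \<Rightarrow> 'k) \<Rightarrow> (mono \<Rightarrow> 'k)" where
  "sscale c f = (\<lambda>m. c * f m)"

definition smult :: "(mono \<Rightarrow> 'k::field) \<Rightarrow> (mono \<Rightarrow> 'k) \<Rightarrow> (mono \<Rightarrow> 'k)" where
  "smult f g = (\<lambda>m. \<Sum>(p, q) \<in> {(p, q). f p \<noteq> 0 \<and> g q \<noteq> 0 \<and> bmul p q = m}. f p * g q)"

definition genx :: "nat \<Rightarrow> (mono \<Rightarrow> 'k::field)" where
  "genx i = (\<lambda>m. if m = ((\<lambda>j. if j = i then 1 else 0), (\<lambda>j. 0)) then 1 else 0)"

definition geny :: "nat \<Rightarrow> (mono \<Rightarrow> 'k::field)" where
  "geny i = (\<lambda>m. if m = ((\<lambda>j. 0), (\<lambda>j. if j = i then 1 else 0)) then 1 else 0)"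

definition is_ideal :: "nat \<Rightarrow> (mono \<Rightarrow> 'k::field) set \<Rightarrow> bool" where
  "is_ideal n I \<longleftrightarrow> I \<subseteq> Sn n \<and> szero \<in> I \<and>
     (\<forall>a\<in>I. \<forall>b\<in>I. sadd a b \<in> I) \<and> (\<forall>a\<in>I. sneg a \<in> I) \<and>
     (\<forall>r\<in>Sn n. \<forall>a\<in>I. smult r a \<in> I \<and> smult a r \<in> I)"

definition is_prime_ideal :: "nat \<Rightarrow> (mono \<Rightarrow> 'k::field) set \<Rightarrow> bool" where
  "is_prime_ideal n P \<longleftrightarrow> is_ideal n P \<and> P \<noteq> Sn n \<and>
     (\<forall>I J. is_ideal n I \<and> is_ideal n J \<and> (\<forall>a\<in>I. \<forall>b\<in>J. smult a b \<in> P)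
        \<longrightarrow> I \<subseteq> P \<or> J \<subseteq> P)"

definition ideal_gen :: "nat \<Rightarrow> (mono \<Rightarrow> 'k::field) set \<Rightarrow> (mono \<Rightarrow> 'k) set" where
  "ideal_gen n A = \<Inter> {I. is_ideal n I \<and> A \<subseteq> I}"

definition pideal :: "nat \<Rightarrow> nat \<Rightarrow> (mono \<Rightarrow> 'k::field) set" where
  "pideal n i = ideal_gen n {sadd sone (sneg (smult (genx i) (geny i)))}"

definition aideal :: "nat \<Rightarrow> (mono \<Rightarrow> 'k::field) set" where
  "aideal n = {foldr sadd (map f [0..<n]) szero | f. \<forall>i<n. f i \<in> pideal n i}"

definition Gn :: "nat \<Rightarrow> ((mono \<Rightarrow> 'k::field) \<Rightarrow> (mono \<Rightarrow> 'k)) set" where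
  "Gn n = {\<sigma>. bij_betw \<sigma> (Sn n) (Sn n) \<and>
     (\<forall>f\<in>Sn n. \<forall>g\<in>Sn n. \<sigma> (sadd f g) = sadd (\<sigma> f) (\<sigma> g) \<and>
                         \<sigma> (smult f g) = smult (\<sigma> f) (\<sigma> g)) \<and>
     \<sigma> sone = sone \<and> (\<forall>c. \<forall>f\<in>Sn n. \<sigma> (sscale c f) = sscale c (\<sigma> f))}"

end

theory Submission
  imports Defs "HOL-Library.Poly_Mapping"
begin

definition supp :: "(mono \<Rightarrow> 'k::field) \<Rightarrow> mono set" where
  "supp f = {m. f m \<noteq> 0}"

definition mon :: "mono \<Rightarrow> mono \<Rightarrow> 'k::field" where
  "mon p = (\<lambda>m. if m = p then 1 else 0)"

definition u0 :: mono where "u0 = ((\<lambda>i. 0), (\<lambda>i. 0))"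

lemma sone_mon: "sone = mon u0" by (simp add: sone_def mon_def u0_def)

lemma smult_eq:
  fixes f g :: "mono \<Rightarrow> 'k::field"
  assumes A: "finite A" "supp f \<subseteq> A" and B: "finite B" "supp g \<subseteq> B"
  shows "smult f g m = (\<Sum>p\<in>A. \<Sum>q\<in>B. if bmul p q = m then f p * g q else 0)"
proof -
  have S: "{(p, q). f p \<noteq> 0 \<and> g q \<noteq> 0 \<and> bmul p q = m} \<subseteq> A \<times> B"
    using A B by (auto simp: supp_def)
  have "smult f g m = (\<Sum>(p,q)\<in>{(p, q). f p \<noteq> 0 \<and> g q \<noteq> 0 \<and> bmul p q = m}. f p * g q)"
    by (simp add: smult_def)
  also have "\<dots> = (\<Sum>(p,q)\<in>A \<times> B. if bmul p q = m then f p * g q else 0)"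
    by (rule sum.mono_neutral_cong_left) (use S A B in \<open>auto split: if_splits\<close>)
  also have "\<dots> = (\<Sum>p\<in>A. \<Sum>q\<in>B. if bmul p q = m then f p * g q else 0)"
    by (simp add: sum.cartesian_product)
  finally show ?thesis .
qed

lemma bmul_assoc: "bmul (bmul p q) r = bmul p (bmul q r)"
  by (auto simp: bmul_def fun_eq_iff min_def)

lemma bmul_u0 [simp]: "bmul u0 p = p" "bmul p u0 = p"
  by (auto simp: bmul_def u0_def)

lemma valid_bmul: "p \<in> valid_monos n \<Longrightarrow> q \<in> valid_monos n \<Longrightarrow> bmul p q \<in> valid_monos n"
  by (auto simp: valid_monos_def bmul_def)

lemma u0_valid [simp]: "u0 \<in> valid_monos n" by (simp add: u0_def valid_monos_def)

lemma Sn_iff: "f \<in> Sn n \<longleftrightarrow> finite (supp f) \<and> supp f \<subseteq> valid_monos n"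
  by (auto simp: Sn_def supp_def)

lemma supp_sadd: "supp (sadd f g) \<subseteq> supp f \<union> supp g"
  by (auto simp: supp_def sadd_def)
lemma supp_sneg [simp]: "supp (sneg f) = supp f"
  by (auto simp: supp_def sneg_def)
lemma supp_sscale: "supp (sscale c f) \<subseteq> supp f"
  by (auto simp: supp_def sscale_def)
lemma supp_mon [simp]: "supp (mon p) = {p}"
  by (auto simp: supp_def mon_def)
lemma supp_szero [simp]: "supp szero = {}"
  by (auto simp: supp_def szero_def)

lemma supp_smult:
  assumes "finite (supp f)" "finite (supp g)"
  shows "supp (smult f g) \<subseteq> (\<lambda>(p,q). bmul p q) ` (supp f \<times> supp g)"
proof
  fix m assume "m \<in> supp (smult f g)"
  hence "smult f g m \<noteq> 0" by (simp add: supp_def)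
  hence "{(p, q). f p \<noteq> 0 \<and> g q \<noteq> 0 \<and> bmul p q = m} \<noteq> {}"
    unfolding smult_def by (metis (no_types, lifting) sum.empty)
  then obtain p q where "f p \<noteq> 0" "g q \<noteq> 0" "bmul p q = m" by auto
  hence "(p,q) \<in> supp f \<times> supp g" "m = (\<lambda>(p,q). bmul p q) (p,q)" by (auto simp: supp_def)
  thus "m \<in> (\<lambda>(p,q). bmul p q) ` (supp f \<times> supp g)"
    by force
qed

lemma finite_supp_smult:
  "finite (supp f) \<Longrightarrow> finite (supp g) \<Longrightarrow> finite (supp (smult f g))"
  by (rule finite_subset[OF supp_smult]) auto

lemma Sn_sadd: "f \<in> Sn n \<Longrightarrow> g \<in> Sn n \<Longrightarrow> sadd f g \<in> Sn n"
  using supp_sadd[of f g] by (auto simp: Sn_iff intro: finite_subset)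
lemma Sn_sneg: "f \<in> Sn n \<Longrightarrow> sneg f \<in> Sn n"
  by (auto simp: Sn_iff)
lemma Sn_sscale: "f \<in> Sn n \<Longrightarrow> sscale c f \<in> Sn n"
  using supp_sscale[of c f] by (auto simp: Sn_iff intro: finite_subset)
lemma Sn_mon: "p \<in> valid_monos n \<Longrightarrow> mon p \<in> Sn n"
  by (auto simp: Sn_iff)
lemma Sn_szero: "szero \<in> Sn n"
  by (auto simp: Sn_iff)
lemma Sn_sone: "sone \<in> Sn n"
  by (auto simp: Sn_iff sone_mon)
lemma Sn_smult: assumes "f \<in> Sn n" "g \<in> Sn n" shows "smult f g \<in> Sn n"
proof -
  have "supp (smult f g) \<subseteq> valid_monos n"
  proof
    fix m assume "m \<in> supp (smult f g)"
    then obtain pq where "pq \<in> supp f \<times> supp g" "m = (\<lambda>(p,q). bmul p q) pq"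
      using supp_smult[of f g] assms by (auto simp: Sn_iff)
    thus "m \<in> valid_monos n" using assms valid_bmul[of "fst pq" n "snd pq"]
      by (auto simp: Sn_iff split: prod.splits)
  qed
  thus ?thesis using assms by (simp add: Sn_iff finite_supp_smult)
qed

lemma smult_add_left:
  assumes "finite (supp f)" "finite (supp g)" "finite (supp h)"
  shows "smult (sadd f g) h = sadd (smult f h) (smult g h)"
proof
  fix m
  let ?A = "supp f \<union> supp g"
  have fA: "finite ?A" using assms by auto
  have e1: "smult (sadd f g) h m = (\<Sum>p\<in>?A. \<Sum>q\<in>supp h. if bmul p q = m then sadd f g p * h q else 0)"
    by (rule smult_eq) (use fA assms supp_sadd in auto)
  have e2: "smult f h m = (\<Sum>p\<in>?A. \<Sum>q\<in>supp h. if bmul p q = m then f p * h q else 0)"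
    by (rule smult_eq) (use fA assms in auto)
  have e3: "smult g h m = (\<Sum>p\<in>?A. \<Sum>q\<in>supp h. if bmul p q = m then g p * h q else 0)"
    by (rule smult_eq) (use fA assms in auto)
  show "smult (sadd f g) h m = sadd (smult f h) (smult g h) m"
    apply (simp only: e1 e2 e3 sadd_def[of "smult f h" "smult g h"])
    by (simp add: sadd_def sum.distrib[symmetric] distrib_right if_distrib cong: if_cong)
qed

lemma smult_add_right:
  assumes "finite (supp f)" "finite (supp g)" "finite (supp h)"
  shows "smult h (sadd f g) = sadd (smult h f) (smult h g)"
proof
  fix m
  let ?A = "supp f \<union> supp g"
  have fA: "finite ?A" using assms by auto
  have e1: "smult h (sadd f g) m = (\<Sum>q\<in>supp h. \<Sum>p\<in>?A. if bmul q p = m then h q * sadd f g p else 0)"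
    by (rule smult_eq) (use fA assms supp_sadd in auto)
  have e2: "smult h f m = (\<Sum>q\<in>supp h. \<Sum>p\<in>?A. if bmul q p = m then h q * f p else 0)"
    by (rule smult_eq) (use fA assms in auto)
  have e3: "smult h g m = (\<Sum>q\<in>supp h. \<Sum>p\<in>?A. if bmul q p = m then h q * g p else 0)"
    by (rule smult_eq) (use fA assms in auto)
  show "smult h (sadd f g) m = sadd (smult h f) (smult h g) m"
    apply (simp only: e1 e2 e3 sadd_def[of "smult h f" "smult h g"])
    by (simp add: sadd_def sum.distrib[symmetric] distrib_left if_distrib cong: if_cong)
qed

lemma smult_scale_left:
  assumes "finite (supp f)" "finite (supp h)"
  shows "smult (sscale c f) h = sscale c (smult f h)"
proof
  fix m
  have e1: "smult (sscale c f) h m = (\<Sum>p\<in>supp f. \<Sum>q\<in>supp h. if bmul p q = m then sscale c f p * h q else 0)"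
    by (rule smult_eq) (use assms supp_sscale in auto)
  have e2: "smult f h m = (\<Sum>p\<in>supp f. \<Sum>q\<in>supp h. if bmul p q = m then f p * h q else 0)"
    by (rule smult_eq) (use assms in auto)
  show "smult (sscale c f) h m = sscale c (smult f h) m"
    apply (simp only: e1 e2 sscale_def[of c "smult f h"])
    by (simp add: sscale_def sum_distrib_left mult.assoc if_distrib cong: if_cong)
qed

lemma smult_scale_right:
  assumes "finite (supp f)" "finite (supp h)"
  shows "smult h (sscale c f) = sscale c (smult h f)"
proof
  fix m
  have e1: "smult h (sscale c f) m = (\<Sum>q\<in>supp h. \<Sum>p\<in>supp f. if bmul q p = m then h q * sscale c f p else 0)"
    by (rule smult_eq) (use assms supp_sscale in auto)
  have e2: "smult h f m = (\<Sum>q\<in>supp h. \<Sum>p\<in>supp f. if bmul q p = m then h q * f p else 0)"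
    by (rule smult_eq) (use assms in auto)
  show "smult h (sscale c f) m = sscale c (smult h f) m"
    apply (simp only: e1 e2 sscale_def[of c "smult h f"])
    by (simp add: sscale_def sum_distrib_left mult_ac if_distrib cong: if_cong)
qed

lemma smult_mon_mon: "smult (mon p) (mon q) = (mon (bmul p q) :: mono \<Rightarrow> 'k::field)"
proof
  fix m
  show "smult (mon p) (mon q) m = (mon (bmul p q) :: mono \<Rightarrow> 'k::field) m"
    apply (subst smult_eq[of "{p}" _ "{q}"])
    apply simp_all
    by (simp add: mon_def)
qed

lemma sum_delta_in:
  "finite C \<Longrightarrow> x \<in> C \<Longrightarrow> (\<Sum>r\<in>C. if x = r then X r else 0) = (X x :: 'a::comm_monoid_add)"
  by (simp add: sum.delta)

lemma sum_delta_conj: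
  "finite C \<Longrightarrow> x \<in> C \<Longrightarrow> (\<Sum>r\<in>C. if x = r \<and> P r then Y else 0) = (if P x then Y else (0::'a::comm_monoid_add))"
proof -
  assume "finite C" "x \<in> C"
  have "(\<Sum>r\<in>C. if x = r \<and> P r then Y else 0) = (\<Sum>r\<in>C. if x = r then (if P r then Y else 0) else 0)"
    by (rule sum.cong) auto
  also have "\<dots> = (if P x then Y else 0)" using \<open>finite C\<close> \<open>x \<in> C\<close> by (simp add: sum.delta)
  finally show ?thesis .
qed

lemma sum_swap4:
  "(\<Sum>r\<in>C. \<Sum>s\<in>H. \<Sum>p\<in>F. \<Sum>q\<in>G. X r s p q) = (\<Sum>p\<in>F. \<Sum>q\<in>G. \<Sum>s\<in>H. \<Sum>r\<in>C. (X r s p q :: 'a::comm_monoid_add))"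
proof -
  have "(\<Sum>r\<in>C. \<Sum>s\<in>H. \<Sum>p\<in>F. \<Sum>q\<in>G. X r s p q) = (\<Sum>r\<in>C. \<Sum>p\<in>F. \<Sum>s\<in>H. \<Sum>q\<in>G. X r s p q)"
    by (intro sum.cong refl, rule sum.swap)
  also have "\<dots> = (\<Sum>r\<in>C. \<Sum>p\<in>F. \<Sum>q\<in>G. \<Sum>s\<in>H. X r s p q)"
    by (intro sum.cong refl, rule sum.swap)
  also have "\<dots> = (\<Sum>p\<in>F. \<Sum>r\<in>C. \<Sum>q\<in>G. \<Sum>s\<in>H. X r s p q)"
    by (rule sum.swap)
  also have "\<dots> = (\<Sum>p\<in>F. \<Sum>q\<in>G. \<Sum>r\<in>C. \<Sum>s\<in>H. X r s p q)"
    by (intro sum.cong refl, rule sum.swap)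
  also have "\<dots> = (\<Sum>p\<in>F. \<Sum>q\<in>G. \<Sum>s\<in>H. \<Sum>r\<in>C. X r s p q)"
    by (intro sum.cong refl, rule sum.swap)
  finally show ?thesis .
qed

lemma sum_swap3:
  "(\<Sum>t\<in>D. \<Sum>q\<in>G. \<Sum>s\<in>H. X t q s) = (\<Sum>q\<in>G. \<Sum>s\<in>H. \<Sum>t\<in>D. (X t q s :: 'a::comm_monoid_add))"
proof -
  have "(\<Sum>t\<in>D. \<Sum>q\<in>G. \<Sum>s\<in>H. X t q s) = (\<Sum>q\<in>G. \<Sum>t\<in>D. \<Sum>s\<in>H. X t q s)"
    by (rule sum.swap)
  also have "\<dots> = (\<Sum>q\<in>G. \<Sum>s\<in>H. \<Sum>t\<in>D. X t q s)"
    by (intro sum.cong refl, rule sum.swap)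
  finally show ?thesis .
qed

lemma sone_u0 [simp]: "(sone u0 :: 'a::field) = 1" by (simp add: sone_def u0_def)

lemma if_mult_zero: "(if c then a else 0) * (b::'a::mult_zero) = (if c then a * b else 0)"
  "b * (if c then a else 0) = (if c then b * a else 0)" by auto

lemma smult_assoc:
  fixes f g h :: "mono \<Rightarrow> 'k::field"
  assumes fin: "finite (supp f)" "finite (supp g)" "finite (supp h)"
  shows "smult (smult f g) h = smult f (smult g h)"
proof
  fix m
  define F where "F = supp f"
  define G where "G = supp g"
  define H where "H = supp h"
  define C where "C = (\<lambda>(p,q). bmul p q) ` (F \<times> G)"
  define D where "D = (\<lambda>(p,q). bmul p q) ` (G \<times> H)"
  have fF: "finite F" "finite G" "finite H" using fin by (auto simp: F_def G_def H_def)
  hence fC: "finite C" "finite D" by (auto simp: C_def D_def)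
  have sC: "supp (smult f g) \<subseteq> C" using supp_smult[OF fin(1,2)] by (simp add: C_def F_def G_def)
  have sD: "supp (smult g h) \<subseteq> D" using supp_smult[OF fin(2,3)] by (simp add: D_def H_def G_def)
  have fg: "\<And>r. smult f g r = (\<Sum>p\<in>F. \<Sum>q\<in>G. if bmul p q = r then f p * g q else 0)"
    by (rule smult_eq) (use fF in \<open>auto simp: F_def G_def\<close>)
  have gh: "\<And>t. smult g h t = (\<Sum>q\<in>G. \<Sum>s\<in>H. if bmul q s = t then g q * h s else 0)"
    by (rule smult_eq) (use fF in \<open>auto simp: H_def G_def\<close>)
  have "smult (smult f g) h m = (\<Sum>r\<in>C. \<Sum>s\<in>H. if bmul r s = m then smult f g r * h s else 0)"
    by (rule smult_eq) (use fF fC sC in \<open>auto simp: H_def\<close>)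
  also have "\<dots> = (\<Sum>r\<in>C. \<Sum>s\<in>H. \<Sum>p\<in>F. \<Sum>q\<in>G. if bmul p q = r \<and> bmul r s = m then f p * g q * h s else 0)"
    unfolding fg apply (intro sum.cong refl)
    subgoal for r s by (cases "bmul r s = m") (simp_all add: sum_distrib_right if_mult_zero)
    done
  also have "\<dots> = (\<Sum>p\<in>F. \<Sum>q\<in>G. \<Sum>s\<in>H. \<Sum>r\<in>C. if bmul p q = r \<and> bmul r s = m then f p * g q * h s else 0)"
    by (rule sum_swap4)
  also have "\<dots> = (\<Sum>p\<in>F. \<Sum>q\<in>G. \<Sum>s\<in>H. if bmul (bmul p q) s = m then f p * g q * h s else 0)"
    apply (intro sum.cong refl)
    apply (subst sum_delta_conj)
    using fC by (auto simp: C_def)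
  finally have L: "smult (smult f g) h m = \<dots>" .
  have "smult f (smult g h) m = (\<Sum>p\<in>F. \<Sum>t\<in>D. if bmul p t = m then f p * smult g h t else 0)"
    by (rule smult_eq) (use fF fC sD in \<open>auto simp: F_def\<close>)
  also have "\<dots> = (\<Sum>p\<in>F. \<Sum>t\<in>D. \<Sum>q\<in>G. \<Sum>s\<in>H. if bmul q s = t \<and> bmul p t = m then f p * g q * h s else 0)"
    unfolding gh apply (intro sum.cong refl)
    subgoal for p t apply (cases "bmul p t = m")
       apply (simp_all only: sum_distrib_left if_mult_zero if_True if_False sum.neutral_const simp_thms)
      apply (intro sum.cong refl) apply (simp add: mult.assoc)
      done
    done
  also have "\<dots> = (\<Sum>p\<in>F. \<Sum>q\<in>G. \<Sum>s\<in>H. \<Sum>t\<in>D. if bmul q s = t \<and> bmul p t = m then f p * g q * h s else 0)"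
    by (rule sum.cong[OF refl], rule sum_swap3)
  also have "\<dots> = (\<Sum>p\<in>F. \<Sum>q\<in>G. \<Sum>s\<in>H. if bmul p (bmul q s) = m then f p * g q * h s else 0)"
    apply (intro sum.cong refl)
    apply (subst sum_delta_conj)
    using fC by (auto simp: D_def)
  finally show "smult (smult f g) h m = smult f (smult g h) m"
    using L by (simp add: bmul_assoc)
qed

lemma smult_sone_left: "finite (supp f) \<Longrightarrow> smult sone f = f"
proof
  fix m assume fin: "finite (supp f)"
  have "smult sone f m = (\<Sum>p\<in>{u0}. \<Sum>q\<in>supp f. if bmul p q = m then sone p * f q else 0)"
    by (rule smult_eq) (use fin in \<open>auto simp: sone_mon\<close>)
  also have "\<dots> = (\<Sum>q\<in>supp f. if q = m then f q else 0)"
    by (simp only: sum.insert_remove finite.emptyI sum.empty bmul_u0 sone_u0 mult_1_left mult_1_right Diff_empty empty_iff add_0_right if_False empty_Diff sum.empty)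
  also have "\<dots> = f m" using fin by (simp add: sum.delta' supp_def)
  finally show "smult sone f m = f m" .
qed

lemma smult_sone_right: "finite (supp f) \<Longrightarrow> smult f sone = f"
proof
  fix m assume fin: "finite (supp f)"
  have "smult f sone m = (\<Sum>q\<in>supp f. \<Sum>p\<in>{u0}. if bmul q p = m then f q * sone p else 0)"
    by (rule smult_eq) (use fin in \<open>auto simp: sone_mon\<close>)
  also have "\<dots> = (\<Sum>q\<in>supp f. if q = m then f q else 0)"
    by (simp only: sum.insert_remove finite.emptyI sum.empty bmul_u0 sone_u0 mult_1_left mult_1_right Diff_empty empty_iff add_0_right if_False empty_Diff sum.empty)
  also have "\<dots> = f m" using fin by (simp add: sum.delta' supp_def)
  finally show "smult f sone m = f m" .
qed

lemma smult_zero_left: "smult szero f = szero"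
  by (simp add: smult_def szero_def fun_eq_iff)
lemma smult_zero_right: "smult f szero = szero"
  by (simp add: smult_def szero_def fun_eq_iff)

lemma fin_induct:
  assumes "finite (supp f)" "supp f \<subseteq> V"
    and "Q szero"
    and "\<And>m c g. m \<in> V \<Longrightarrow> finite (supp g) \<Longrightarrow> supp g \<subseteq> V \<Longrightarrow> m \<notin> supp g \<Longrightarrow> Q g \<Longrightarrow> Q (sadd (sscale c (mon m)) g)"
  shows "Q f"
  using assms(1,2)
proof (induction "card (supp f)" arbitrary: f)
  case 0
  hence "f = szero" by (auto simp: supp_def szero_def fun_eq_iff)
  thus ?case using assms(3) by simp
next
  case (Suc k)
  then obtain m where m: "m \<in> supp f" by (metis card.empty empty_iff nat.distinct(1) subsetI subset_antisym)
  define g where "g = (\<lambda>x. if x = m then 0 else f x)"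
  have sg: "supp g = supp f - {m}" by (auto simp: g_def supp_def)
  have "f = sadd (sscale (f m) (mon m)) g"
    by (auto simp: g_def sadd_def sscale_def mon_def fun_eq_iff)
  moreover have "Q g"
    using Suc sg m by (intro Suc.hyps) (auto simp: card_Diff_singleton)
  ultimately show ?case using assms(4)[of m g "f m"] Suc sg m by auto
qed

lemma Sn_fin: "f \<in> Sn n \<Longrightarrow> finite (supp f)" by (simp add: Sn_iff)

lemma sneg_scale: "sneg f = sscale (-1) f" by (simp add: sneg_def sscale_def fun_eq_iff)

lemma smult_neg_left: "finite (supp f) \<Longrightarrow> finite (supp h) \<Longrightarrow> smult (sneg f) h = sneg (smult f h)"
  by (simp add: sneg_scale smult_scale_left)
lemma smult_neg_right: "finite (supp f) \<Longrightarrow> finite (supp h) \<Longrightarrow> smult h (sneg f) = sneg (smult h f)"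
  by (simp add: sneg_scale smult_scale_right)

lemma is_ideal_Sn: "is_ideal n (Sn n)"
  by (auto simp: is_ideal_def Sn_szero Sn_sadd Sn_sneg Sn_smult)

lemma ideal_sub: "is_ideal n I \<Longrightarrow> I \<subseteq> Sn n" by (simp add: is_ideal_def)

lemma ideal_add: "is_ideal n I \<Longrightarrow> a \<in> I \<Longrightarrow> b \<in> I \<Longrightarrow> sadd a b \<in> I"
  by (simp add: is_ideal_def)
lemma ideal_neg: "is_ideal n I \<Longrightarrow> a \<in> I \<Longrightarrow> sneg a \<in> I"
  by (simp add: is_ideal_def)
lemma ideal_zero: "is_ideal n I \<Longrightarrow> szero \<in> I"
  by (simp add: is_ideal_def)
lemma ideal_multl: "is_ideal n I \<Longrightarrow> r \<in> Sn n \<Longrightarrow> a \<in> I \<Longrightarrow> smult r a \<in> I"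
  by (simp add: is_ideal_def)
lemma ideal_multr: "is_ideal n I \<Longrightarrow> r \<in> Sn n \<Longrightarrow> a \<in> I \<Longrightarrow> smult a r \<in> I"
  by (simp add: is_ideal_def)

lemma Inter_ideal:
  assumes "F \<noteq> {}" "\<And>I. I \<in> F \<Longrightarrow> is_ideal n I"
  shows "is_ideal n (\<Inter>F)"
proof -
  from assms(1) obtain I0 where "I0 \<in> F" by auto
  hence "\<Inter>F \<subseteq> Sn n" using assms(2)[of I0] by (auto simp: is_ideal_def)
  show ?thesis unfolding is_ideal_def
  proof (intro conjI ballI)
    show "\<Inter>F \<subseteq> Sn n" by fact
    show "szero \<in> \<Inter>F" using assms(2) ideal_zero by blast
    show "sadd x y \<in> \<Inter>F" if "x \<in> \<Inter>F" "y \<in> \<Inter>F" for x y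
      using that assms(2) ideal_add by blast
    show "sneg x \<in> \<Inter>F" if "x \<in> \<Inter>F" for x
      using that assms(2) ideal_neg by blast
    show "smult r x \<in> \<Inter>F" if "r \<in> Sn n" "x \<in> \<Inter>F" for r x
      using that assms(2) ideal_multl by blast
    show "smult x r \<in> \<Inter>F" if "r \<in> Sn n" "x \<in> \<Inter>F" for r x
      using that assms(2) ideal_multr by blast
  qed
qed

lemma ideal_gen_ideal:
  assumes "A \<subseteq> Sn n" shows "is_ideal n (ideal_gen n A)"
  unfolding ideal_gen_def
  by (rule Inter_ideal) (use assms is_ideal_Sn in auto)

lemma ideal_gen_sup: "A \<subseteq> Sn n \<Longrightarrow> A \<subseteq> ideal_gen n A"
  by (auto simp: ideal_gen_def)

lemma ideal_gen_min: "is_ideal n I \<Longrightarrow> A \<subseteq> I \<Longrightarrow> ideal_gen n A \<subseteq> I"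
  by (auto simp: ideal_gen_def)

lemma supp_sone [simp]: "supp sone = {u0}" by (simp add: sone_mon)

lemma sscale_sone_mult: "finite (supp a) \<Longrightarrow> sscale c a = smult (sscale c sone) a"
  by (simp add: smult_scale_left smult_sone_left)

lemma ideal_scale: assumes "is_ideal n I" "a \<in> I" shows "sscale c a \<in> I"
proof -
  have "a \<in> Sn n" using assms ideal_sub by blast
  hence "sscale c a = smult (sscale c sone) a" by (intro sscale_sone_mult) (simp add: Sn_iff)
  moreover have "smult (sscale c sone) a \<in> I"
    by (rule ideal_multl[OF assms(1) Sn_sscale[OF Sn_sone] assms(2)])
  ultimately show ?thesis by simp
qed

lemma ideal_sone: fixes I :: "(mono \<Rightarrow> 'k::field) set"
  assumes "is_ideal n I" "sone \<in> I" shows "I = Sn n"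
proof
  show "I \<subseteq> Sn n" using assms ideal_sub by blast
  show "Sn n \<subseteq> I"
  proof
    fix r :: "mono \<Rightarrow> 'k" assume r: "r \<in> Sn n"
    have "smult r sone \<in> I" by (rule ideal_multl[OF assms(1) r assms(2)])
    thus "r \<in> I" using r smult_sone_right[of r] by (simp add: Sn_iff)
  qed
qed

lemma prime_lemma:
  fixes a b :: "mono \<Rightarrow> 'k::field"
  assumes P: "is_prime_ideal n P" and a: "a \<in> Sn n" and b: "b \<in> Sn n"
    and H: "\<forall>s\<in>Sn n. smult (smult a s) b \<in> P"
  shows "a \<in> P \<or> b \<in> P"
proof -
  have IP: "is_ideal n P" using P by (simp add: is_prime_ideal_def)
  define I where "I = ideal_gen n {a}"
  have II: "is_ideal n I" unfolding I_def by (rule ideal_gen_ideal) (use a in auto)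
  have aI: "a \<in> I" using ideal_gen_sup[of "{a}" n] a by (auto simp: I_def)
  define J where "J = {z \<in> Sn n. \<forall>w\<in>I. smult w z \<in> P}"
  have fin: "\<And>x. x \<in> Sn n \<Longrightarrow> finite (supp x)" by (simp add: Sn_iff)
  have IS: "\<And>w. w \<in> I \<Longrightarrow> w \<in> Sn n" using II ideal_sub by blast
  have JI: "is_ideal n J" unfolding is_ideal_def
  proof (intro conjI ballI)
    show "J \<subseteq> Sn n" by (auto simp: J_def)
    show "szero \<in> J" using IP by (auto simp: J_def Sn_szero smult_zero_right ideal_zero)
    show "sadd x y \<in> J" if "x \<in> J" "y \<in> J" for x y
      using that IP IS by (auto simp: J_def Sn_sadd smult_add_right fin intro: ideal_add)
    show "sneg x \<in> J" if "x \<in> J" for x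
      using that IP IS by (auto simp: J_def Sn_sneg smult_neg_right fin intro: ideal_neg)
    show "smult r x \<in> J" if "r \<in> Sn n" "x \<in> J" for r x
      using that IP IS II by (auto simp: J_def Sn_smult smult_assoc[symmetric] fin ideal_multr)
    show "smult x r \<in> J" if "r \<in> Sn n" "x \<in> J" for r x
      using that IP IS II by (auto simp: J_def Sn_smult smult_assoc[symmetric] fin ideal_multr)
  qed
  have "I \<subseteq> P \<or> J \<subseteq> P"
    using P II JI by (auto simp: is_prime_ideal_def J_def)
  moreover have "b \<in> J"
  proof -
    define K where "K = {w \<in> Sn n. \<forall>s\<in>Sn n. smult (smult w s) b \<in> P}"
    have KI: "is_ideal n K" unfolding is_ideal_def
    proof (intro conjI ballI)
      show "K \<subseteq> Sn n" by (auto simp: K_def)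
      show "szero \<in> K" using IP by (auto simp: K_def Sn_szero smult_zero_left ideal_zero)
      show "sadd x y \<in> K" if "x \<in> K" "y \<in> K" for x y
        using that IP b by (auto simp: K_def Sn_sadd smult_add_left fin Sn_smult intro: ideal_add)
      show "sneg x \<in> K" if "x \<in> K" for x
        using that IP b by (auto simp: K_def Sn_sneg smult_neg_left fin Sn_smult intro: ideal_neg)
      show "smult r x \<in> K" if "r \<in> Sn n" "x \<in> K" for r x
        using that IP b by (auto simp: K_def Sn_smult smult_assoc fin ideal_multl)
      show "smult x r \<in> K" if "r \<in> Sn n" "x \<in> K" for r x
      proof -
        have "smult (smult (smult x r) s) b \<in> P" if s: "s \<in> Sn n" for s
        proof -
          have "smult (smult x (smult r s)) b \<in> P" using \<open>x \<in> K\<close> Sn_smult[OF \<open>r \<in> Sn n\<close> s] by (auto simp: K_def)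
          moreover have "smult (smult x r) s = smult x (smult r s)"
            using \<open>x \<in> K\<close> \<open>r \<in> Sn n\<close> s by (intro smult_assoc) (auto simp: K_def fin)
          ultimately show ?thesis by simp
        qed
        thus ?thesis using that by (auto simp: K_def Sn_smult)
      qed
    qed
    have "a \<in> K" using a H by (auto simp: K_def)
    hence "I \<subseteq> K" using KI unfolding I_def by (intro ideal_gen_min) auto
    show "b \<in> J" unfolding J_def
    proof (intro CollectI conjI ballI)
      show "b \<in> Sn n" by fact
      fix w assume "w \<in> I"
      hence "w \<in> K" using \<open>I \<subseteq> K\<close> by auto
      hence "smult (smult w sone) b \<in> P" "w \<in> Sn n" using Sn_sone by (auto simp: K_def)
      thus "smult w b \<in> P" by (simp add: smult_sone_right fin)
    qed
  qed
  ultimately show ?thesis using aI by auto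
qed

section \<open>The ideal a_n\<close>

lemma foldr_eval: "foldr sadd (map f xs) szero = (\<lambda>m. sum_list (map (\<lambda>i. f i m) xs))"
  by (induction xs) (auto simp: sadd_def szero_def)

lemma foldr_in_ideal:
  "is_ideal n J \<Longrightarrow> (\<forall>i\<in>set xs. f i \<in> J) \<Longrightarrow> foldr sadd (map f xs) szero \<in> J"
  by (induction xs) (auto intro: ideal_add ideal_zero)

lemma foldr_Sn: "(\<forall>i\<in>set xs. f i \<in> Sn n) \<Longrightarrow> foldr sadd (map f xs) szero \<in> Sn n"
  using foldr_in_ideal[OF is_ideal_Sn] by blast

lemma foldr_add: "sadd (foldr sadd (map f xs) szero) (foldr sadd (map g xs) szero)
   = foldr sadd (map (\<lambda>i. sadd (f i) (g i)) xs) szero"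
  by (simp add: foldr_eval sadd_def fun_eq_iff sum_list_addf)

lemma foldr_neg: "sneg (foldr sadd (map f xs) szero) = foldr sadd (map (\<lambda>i. sneg (f i)) xs) szero"
proof -
  have "\<And>m. - sum_list (map (\<lambda>i. f i m) xs) = sum_list (map (\<lambda>i. - f i m) xs)"
    by (induction xs) simp_all
  thus ?thesis by (simp add: foldr_eval sneg_def)
qed

lemma foldr_multl:
  assumes "\<forall>i\<in>set xs. f i \<in> Sn n" "r \<in> Sn n"
  shows "smult r (foldr sadd (map f xs) szero) = foldr sadd (map (\<lambda>i. smult r (f i)) xs) szero"
  using assms
proof (induction xs)
  case Nil thus ?case by (simp add: smult_zero_right)
next
  case (Cons a xs)
  hence "foldr sadd (map f xs) szero \<in> Sn n" by (intro foldr_Sn) auto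
  moreover have "finite (supp (f a))" using Cons by (simp add: Sn_iff)
  ultimately show ?case using Cons by (simp add: smult_add_right Sn_fin)
qed

lemma foldr_multr:
  assumes "\<forall>i\<in>set xs. f i \<in> Sn n" "r \<in> Sn n"
  shows "smult (foldr sadd (map f xs) szero) r = foldr sadd (map (\<lambda>i. smult (f i) r) xs) szero"
  using assms
proof (induction xs)
  case Nil thus ?case by (simp add: smult_zero_left)
next
  case (Cons a xs)
  hence "foldr sadd (map f xs) szero \<in> Sn n" by (intro foldr_Sn) auto
  moreover have "finite (supp (f a))" using Cons by (simp add: Sn_iff)
  ultimately show ?case using Cons by (simp add: smult_add_left Sn_fin)
qed

definition egen :: "nat \<Rightarrow> mono \<Rightarrow> 'k::field" where
  "egen i = sadd sone (sneg (smult (genx i) (geny i)))"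

definition dlt :: "nat \<Rightarrow> nat \<Rightarrow> nat" where "dlt i = (\<lambda>j. if j = i then 1 else 0)"

lemma genx_mon: "genx i = mon (dlt i, \<lambda>j. 0)" by (simp add: genx_def mon_def dlt_def)
lemma geny_mon: "geny i = mon (\<lambda>j. 0, dlt i)" by (simp add: geny_def mon_def dlt_def)

lemma dlt_valid: "i < n \<Longrightarrow> (dlt i, \<lambda>j. 0) \<in> valid_monos n" "i < n \<Longrightarrow> (\<lambda>j. 0, dlt i) \<in> valid_monos n"
   "i < n \<Longrightarrow> (dlt i, dlt i) \<in> valid_monos n"
  by (auto simp: valid_monos_def dlt_def)

lemma genx_Sn: "i < n \<Longrightarrow> genx i \<in> Sn n" by (simp add: genx_mon Sn_mon dlt_valid)
lemma geny_Sn: "i < n \<Longrightarrow> geny i \<in> Sn n" by (simp add: geny_mon Sn_mon dlt_valid)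

lemma xy_mon: "smult (genx i) (geny i) = mon (dlt i, dlt i)"
  by (simp add: genx_mon geny_mon smult_mon_mon bmul_def)

lemma yx_one: "smult (geny i) (genx i) = sone"
proof -
  have "bmul (\<lambda>j. 0, dlt i) (dlt i, \<lambda>j. 0) = u0" by (auto simp: bmul_def dlt_def u0_def fun_eq_iff)
  thus ?thesis by (simp add: genx_mon geny_mon smult_mon_mon sone_mon)
qed

lemma egen_Sn: "i < n \<Longrightarrow> egen i \<in> Sn n"
  by (simp add: egen_def Sn_sadd Sn_sneg Sn_smult genx_Sn geny_Sn Sn_sone)

lemma pideal_ideal: "i < n \<Longrightarrow> is_ideal n (pideal n i)"
  unfolding pideal_def egen_def[symmetric] by (rule ideal_gen_ideal) (simp add: egen_Sn)

lemma egen_pideal: "i < n \<Longrightarrow> egen i \<in> pideal n i"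
  unfolding pideal_def egen_def[symmetric] using ideal_gen_sup[of "{egen i}" n] egen_Sn by auto

lemma aideal_iff: "a \<in> aideal n \<longleftrightarrow> (\<exists>f. a = foldr sadd (map f [0..<n]) szero \<and> (\<forall>i<n. f i \<in> pideal n i))"
  by (auto simp: aideal_def)

lemma aideal_intro: "\<forall>i<n. f i \<in> pideal n i \<Longrightarrow> foldr sadd (map f [0..<n]) szero \<in> aideal n"
  unfolding aideal_def by blast

lemma aideal_ideal: "is_ideal n (aideal n :: (mono \<Rightarrow> 'k::field) set)"
  unfolding is_ideal_def
proof (intro conjI ballI)
  have SS: "\<forall>i\<in>set [0..<n]. f i \<in> Sn n" if "\<forall>i<n. f i \<in> pideal n i" for f :: "nat \<Rightarrow> mono \<Rightarrow> 'k"
  proof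
    fix i assume "i \<in> set [0..<n]"
    hence "i < n" by simp
    thus "f i \<in> Sn n" using that pideal_ideal[of i n] ideal_sub[of n "pideal n i"] by blast
  qed
  show "(aideal n :: (mono \<Rightarrow> 'k) set) \<subseteq> Sn n"
  proof
    fix a :: "mono \<Rightarrow> 'k" assume "a \<in> aideal n"
    then obtain f where "a = foldr sadd (map f [0..<n]) szero" "\<forall>i<n. f i \<in> pideal n i"
      unfolding aideal_iff by blast
    thus "a \<in> Sn n" using SS foldr_Sn by metis
  qed
  have eq: "(szero :: mono \<Rightarrow> 'k) = foldr sadd (map (\<lambda>i. szero) [0..<n]) szero"
    unfolding foldr_eval by (simp add: szero_def)
  have "\<forall>i<n. (szero::mono\<Rightarrow>'k) \<in> pideal n i" using pideal_ideal ideal_zero by blast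
  from aideal_intro[OF this] show "(szero :: mono \<Rightarrow> 'k) \<in> aideal n" by (simp only: eq[symmetric])
  show "sadd a b \<in> aideal n" if ab: "a \<in> aideal n" "b \<in> aideal n" for a b :: "mono \<Rightarrow> 'k"
  proof -
    obtain f where f: "a = foldr sadd (map f [0..<n]) szero" "\<forall>i<n. f i \<in> pideal n i"
      using ab unfolding aideal_iff by blast
    obtain g where g: "b = foldr sadd (map g [0..<n]) szero" "\<forall>i<n. g i \<in> pideal n i"
      using ab unfolding aideal_iff by blast
    have "\<forall>i<n. sadd (f i) (g i) \<in> pideal n i" using f g pideal_ideal ideal_add by blast
    from aideal_intro[OF this] show ?thesis unfolding f g foldr_add .
  qed
  show "sneg a \<in> aideal n" if ab: "a \<in> aideal n" for a :: "mono \<Rightarrow> 'k"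
  proof -
    obtain f where f: "a = foldr sadd (map f [0..<n]) szero" "\<forall>i<n. f i \<in> pideal n i"
      using ab unfolding aideal_iff by blast
    have "\<forall>i<n. sneg (f i) \<in> pideal n i" using f pideal_ideal ideal_neg by blast
    from aideal_intro[OF this] show ?thesis unfolding f foldr_neg .
  qed
  show "smult r a \<in> aideal n" if ab: "r \<in> Sn n" "a \<in> aideal n" for r a :: "mono \<Rightarrow> 'k"
  proof -
    obtain f where f: "a = foldr sadd (map f [0..<n]) szero" "\<forall>i<n. f i \<in> pideal n i"
      using ab unfolding aideal_iff by blast
    have "\<forall>i<n. smult r (f i) \<in> pideal n i" using f pideal_ideal ideal_multl ab(1) by blast
    from aideal_intro[OF this] show ?thesis unfolding f foldr_multl[OF SS[OF f(2)] ab(1)] .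
  qed
  show "smult a r \<in> aideal n" if ab: "r \<in> Sn n" "a \<in> aideal n" for r a :: "mono \<Rightarrow> 'k"
  proof -
    obtain f where f: "a = foldr sadd (map f [0..<n]) szero" "\<forall>i<n. f i \<in> pideal n i"
      using ab unfolding aideal_iff by blast
    have "\<forall>i<n. smult (f i) r \<in> pideal n i" using f pideal_ideal ideal_multr ab(1) by blast
    from aideal_intro[OF this] show ?thesis unfolding f foldr_multr[OF SS[OF f(2)] ab(1)] .
  qed
qed

lemma pideal_aideal: assumes "i < n" shows "pideal n i \<subseteq> (aideal n :: (mono \<Rightarrow> 'k::field) set)"
proof
  fix a :: "mono \<Rightarrow> 'k" assume a: "a \<in> pideal n i"
  define f where "f = (\<lambda>j. if j = i then a else szero)"
  have "foldr sadd (map f [0..<n]) szero = a"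
  proof
    fix m
    have "foldr sadd (map f [0..<n]) szero m = (\<Sum>j\<in>{0..<n}. f j m)"
      unfolding foldr_eval by (simp add: sum_list_distinct_conv_sum_set)
    also have "\<dots> = (\<Sum>j\<in>{0..<n}. if j = i then a m else 0)"
      by (rule sum.cong) (auto simp: f_def szero_def)
    also have "\<dots> = a m" using assms by (simp add: sum.delta)
    finally show "foldr sadd (map f [0..<n]) szero m = a m" .
  qed
  moreover have "\<forall>j<n. f j \<in> pideal n j"
  proof (intro allI impI)
    fix j assume "j < n"
    thus "f j \<in> pideal n j" using a pideal_ideal[of j n] ideal_zero[of n "pideal n j"]
      by (cases "j = i") (simp_all add: f_def)
  qed
  ultimately show "a \<in> aideal n" using aideal_intro[of n f] by simp
qed

lemma aideal_min:
  fixes J :: "(mono \<Rightarrow> 'k::field) set"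
  assumes J: "is_ideal n J" "\<forall>i<n. egen i \<in> J" shows "aideal n \<subseteq> J"
proof
  fix a :: "mono \<Rightarrow> 'k" assume a: "a \<in> aideal n"
  have P: "pideal n i \<subseteq> J" if "i < n" for i
    unfolding pideal_def egen_def[symmetric]
    by (rule ideal_gen_min[OF J(1)]) (use J(2) that in simp)
  obtain f where f: "a = foldr sadd (map f [0..<n]) szero" "\<forall>i<n. f i \<in> pideal n i"
    using a unfolding aideal_iff by blast
  have "\<forall>i\<in>set [0..<n]. f i \<in> J"
  proof
    fix i assume "i \<in> set [0..<n]"
    hence "i < n" by simp
    thus "f i \<in> J" using f(2) P by blast
  qed
  thus "a \<in> J" unfolding f(1) by (rule foldr_in_ideal[OF J(1)])
qed

lemma egen_aideal: "i < n \<Longrightarrow> egen i \<in> aideal n"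
  using egen_pideal pideal_aideal by blast

section \<open>The Laurent map\<close>

definition dd :: "nat \<Rightarrow> mono \<Rightarrow> (nat \<Rightarrow>\<^sub>0 int)" where
  "dd n m = Abs_poly_mapping (\<lambda>i. if i < n then int (fst m i) - int (snd m i) else 0)"

lemma lookup_dd: "Poly_Mapping.lookup (dd n m) i = (if i < n then int (fst m i) - int (snd m i) else 0)"
proof -
  have "finite {i. (if i < n then int (fst m i) - int (snd m i) else 0) \<noteq> 0}"
    by (rule finite_subset[of _ "{..<n}"]) auto
  hence "Poly_Mapping.lookup (dd n m) = (\<lambda>i. if i < n then int (fst m i) - int (snd m i) else 0)"
    unfolding dd_def by (rule lookup_Abs_poly_mapping)
  thus ?thesis by simp
qed

lemma dd_bmul: "dd n (bmul p q) = dd n p + dd n q"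
  by (rule poly_mapping_eqI) (auto simp: lookup_dd lookup_add bmul_def min_def of_nat_diff)

lemma dd_u0: "dd n u0 = 0"
  by (rule poly_mapping_eqI) (simp add: lookup_dd u0_def)

definition phi :: "nat \<Rightarrow> (mono \<Rightarrow> 'k::field) \<Rightarrow> ((nat \<Rightarrow>\<^sub>0 int) \<Rightarrow>\<^sub>0 'k)" where
  "phi n f = (\<Sum>m\<in>supp f. Poly_Mapping.single (dd n m) (f m))"

lemma phi_eq: assumes "finite A" "supp f \<subseteq> A"
  shows "phi n f = (\<Sum>m\<in>A. Poly_Mapping.single (dd n m) (f m))"
  unfolding phi_def
  by (rule sum.mono_neutral_left) (use assms in \<open>auto simp: supp_def\<close>)

lemma lookup_phi: assumes "finite (supp f)"
  shows "Poly_Mapping.lookup (phi n f) e = (\<Sum>m\<in>supp f. if dd n m = e then f m else 0)"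
  unfolding phi_def lookup_sum by (simp add: lookup_single when_def)

lemma phi_add: assumes "finite (supp f)" "finite (supp g)"
  shows "phi n (sadd f g) = phi n f + phi n g"
proof -
  let ?A = "supp f \<union> supp g"
  have "phi n (sadd f g) = (\<Sum>m\<in>?A. Poly_Mapping.single (dd n m) (sadd f g m))"
    by (rule phi_eq) (use assms supp_sadd in auto)
  also have "\<dots> = (\<Sum>m\<in>?A. Poly_Mapping.single (dd n m) (f m)) + (\<Sum>m\<in>?A. Poly_Mapping.single (dd n m) (g m))"
    by (simp add: sadd_def single_add sum.distrib)
  also have "\<dots> = phi n f + phi n g"
    using assms by (simp add: phi_eq[symmetric])
  finally show ?thesis .
qed

lemma phi_neg: "phi n (sneg f) = - phi n f"
  unfolding phi_def supp_sneg by (simp add: sneg_def single_uminus sum_negf)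

lemma phi_zero: "phi n szero = 0"
  by (simp add: phi_def)

lemma phi_mon: "phi n (mon p) = Poly_Mapping.single (dd n p) 1"
  unfolding phi_def supp_mon by (simp add: mon_def)

lemma phi_mult:
  fixes f g :: "mono \<Rightarrow> 'k::field"
  assumes fin: "finite (supp f)" "finite (supp g)"
  shows "phi n (smult f g) = phi n f * phi n g"
proof -
  define F where "F = supp f"
  define G where "G = supp g"
  define C where "C = (\<lambda>(p,q). bmul p q) ` (F \<times> G)"
  have fF: "finite F" "finite G" using fin by (auto simp: F_def G_def)
  hence fC: "finite C" by (auto simp: C_def)
  have sC: "supp (smult f g) \<subseteq> C" using supp_smult[OF fin] by (simp add: C_def F_def G_def)
  have fg: "\<And>r. smult f g r = (\<Sum>p\<in>F. \<Sum>q\<in>G. if bmul p q = r then f p * g q else 0)"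
    by (rule smult_eq) (use fF in \<open>auto simp: F_def G_def\<close>)
  have sing_sum: "\<And>k X. Poly_Mapping.single k (sum X (S::mono set)) = (\<Sum>x\<in>S. Poly_Mapping.single k (X x :: 'k))" for S
    by (rule poly_mapping_eqI) (simp add: lookup_sum lookup_single when_def sum.If_cases)
  have "phi n (smult f g) = (\<Sum>r\<in>C. Poly_Mapping.single (dd n r) (smult f g r))"
    by (rule phi_eq[OF fC sC])
  also have "\<dots> = (\<Sum>r\<in>C. \<Sum>p\<in>F. \<Sum>q\<in>G. if bmul p q = r then Poly_Mapping.single (dd n r) (f p * g q) else 0)"
    unfolding fg sing_sum by (intro sum.cong refl) (simp add: if_distrib)
  also have "\<dots> = (\<Sum>p\<in>F. \<Sum>q\<in>G. \<Sum>r\<in>C. if bmul p q = r then Poly_Mapping.single (dd n r) (f p * g q) else 0)"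
    by (subst sum.swap, rule sum.cong[OF refl], rule sum.swap)
  also have "\<dots> = (\<Sum>p\<in>F. \<Sum>q\<in>G. Poly_Mapping.single (dd n (bmul p q)) (f p * g q))"
    by (intro sum.cong refl, subst sum_delta_in) (use fC in \<open>auto simp: C_def\<close>)
  also have "\<dots> = (\<Sum>p\<in>F. \<Sum>q\<in>G. Poly_Mapping.single (dd n p) (f p) * Poly_Mapping.single (dd n q) (g q))"
    by (simp add: dd_bmul mult_single)
  also have "\<dots> = phi n f * phi n g"
    by (simp add: phi_def F_def G_def sum_product)
  finally show ?thesis .
qed

lemma phi_sone: "phi n sone = 1"
  by (simp add: sone_mon phi_mon dd_u0)

definition kerphi :: "nat \<Rightarrow> (mono \<Rightarrow> 'k::field) set" where
  "kerphi n = {f \<in> Sn n. phi n f = 0}"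

lemma kerphi_ideal: "is_ideal n (kerphi n)"
  unfolding is_ideal_def kerphi_def
  by (auto simp: Sn_szero Sn_sadd Sn_sneg Sn_smult phi_zero phi_add phi_neg phi_mult Sn_fin)

lemma egen_ker: assumes "i < n" shows "egen i \<in> kerphi n"
proof -
  have "dd n (dlt i, dlt i) = 0" by (rule poly_mapping_eqI) (simp add: lookup_dd)
  hence "phi n (egen i) = 0"
    by (simp add: egen_def phi_add phi_neg xy_mon phi_mon phi_sone Sn_fin)
  thus ?thesis using egen_Sn[OF assms] by (simp add: kerphi_def)
qed

lemma aideal_ker: "aideal n \<subseteq> kerphi n"
  by (rule aideal_min[OF kerphi_ideal]) (simp add: egen_ker)

definition red :: "mono \<Rightarrow> mono" where
  "red m = ((\<lambda>i. fst m i - snd m i), (\<lambda>i. snd m i - fst m i))"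

definition smin :: "nat \<Rightarrow> mono \<Rightarrow> nat" where
  "smin n m = (\<Sum>i<n. min (fst m i) (snd m i))"

lemma red_valid: "m \<in> valid_monos n \<Longrightarrow> red m \<in> valid_monos n"
  by (auto simp: red_def valid_monos_def)

lemma nat_int_diff: "(a::nat) - b = a' - b' \<and> b - a = b' - a' \<Longrightarrow> int a - int b = int a' - int b'"
  by arith

lemma min0: "min (a::nat) b = 0 \<Longrightarrow> a - b = a \<and> b - a = b" by arith

lemma red_dd: assumes "m \<in> valid_monos n" "m' \<in> valid_monos n"
  shows "red m = red m' \<longleftrightarrow> dd n m = dd n m'"
proof
  assume "red m = red m'"
  hence "\<And>i. fst m i - snd m i = fst m' i - snd m' i \<and> snd m i - fst m i = snd m' i - fst m' i"
    by (auto simp: red_def prod_eq_iff fun_eq_iff)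
  hence E: "int (fst m i) - int (snd m i) = int (fst m' i) - int (snd m' i)" for i
    using nat_int_diff[of "fst m i" "snd m i" "fst m' i" "snd m' i"] by blast
  show "dd n m = dd n m'"
    by (intro poly_mapping_eqI) (simp add: lookup_dd E)
next
  assume "dd n m = dd n m'"
  hence L: "\<And>i. i < n \<Longrightarrow> int (fst m i) - int (snd m i) = int (fst m' i) - int (snd m' i)"
    by (metis lookup_dd)
  have "fst m i - snd m i = fst m' i - snd m' i \<and> snd m i - fst m i = snd m' i - fst m' i" for i
  proof (cases "i < n")
    case True thus ?thesis using L[OF True] by linarith
  next
    case False thus ?thesis using assms by (auto simp: valid_monos_def)
  qed
  thus "red m = red m'" by (auto simp: red_def prod_eq_iff fun_eq_iff)
qed

lemma mon_step:
  fixes m :: mono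
  assumes v: "m \<in> valid_monos n" and i: "i < n" "fst m i \<ge> 1" "snd m i \<ge> 1"
  shows "sadd (mon m) (sneg (mon ((\<lambda>j. fst m j - dlt i j), (\<lambda>j. snd m j - dlt i j)))) \<in> (aideal n :: (mono \<Rightarrow> 'k::field) set)"
proof -
  define u :: mono where "u = ((\<lambda>j. fst m j - dlt i j), (\<lambda>j. 0))"
  define v :: mono where "v = ((\<lambda>j. 0), (\<lambda>j. snd m j - dlt i j))"
  have uv: "u \<in> valid_monos n" "v \<in> valid_monos n" using v by (auto simp: u_def v_def valid_monos_def)
  have b1: "bmul (bmul u (dlt i, dlt i)) v = m"
    using i by (auto simp: bmul_def u_def v_def dlt_def fun_eq_iff prod_eq_iff)
  have b2: "bmul u v = ((\<lambda>j. fst m j - dlt i j), (\<lambda>j. snd m j - dlt i j))"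
    by (auto simp: bmul_def u_def v_def dlt_def fun_eq_iff)
  define X :: "mono \<Rightarrow> 'k" where "X = sneg (egen i)"
  have XA: "X \<in> aideal n" unfolding X_def by (rule ideal_neg[OF aideal_ideal egen_aideal[OF i(1)]])
  have Xe: "X = sadd (mon (dlt i, dlt i)) (sneg sone)"
    by (simp add: X_def egen_def xy_mon sadd_def sneg_def fun_eq_iff)
  have "smult (smult (mon u) X) (mon v) \<in> aideal n"
    by (rule ideal_multr[OF aideal_ideal Sn_mon[OF uv(2)]], rule ideal_multl[OF aideal_ideal Sn_mon[OF uv(1)] XA])
  moreover have "smult (smult (mon u) X) (mon v) = sadd (mon m) (sneg (mon ((\<lambda>j. fst m j - dlt i j), (\<lambda>j. snd m j - dlt i j))))"
    unfolding Xe
    by (simp add: smult_add_right smult_add_left smult_neg_right smult_neg_left smult_mon_mon finite_supp_smult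
        b1 b2 smult_sone_right)
  ultimately show ?thesis by simp
qed

lemma mon_red:
  assumes "m \<in> valid_monos n"
  shows "sadd (mon m) (sneg (mon (red m))) \<in> (aideal n :: (mono \<Rightarrow> 'k::field) set)"
  using assms
proof (induction "smin n m" arbitrary: m)
  case 0
  have "red m = m"
  proof -
    have mz: "min (fst m i) (snd m i) = 0" for i
    proof (cases "i < n")
      case True thus ?thesis using 0 by (simp add: smin_def)
    next
      case False thus ?thesis using 0(2) by (simp add: valid_monos_def split: prod.splits)
    qed
    have "fst m i - snd m i = fst m i \<and> snd m i - fst m i = snd m i" for i
      by (rule min0[OF mz])
    thus ?thesis by (auto simp: red_def prod_eq_iff fun_eq_iff)
  qed
  moreover have "sadd (mon m) (sneg (mon m)) = (szero :: mono \<Rightarrow> 'k)"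
    by (simp add: sadd_def sneg_def szero_def)
  ultimately show ?case using ideal_zero[OF aideal_ideal] by simp
next
  case (Suc k)
  have "\<exists>i<n. min (fst m i) (snd m i) \<noteq> 0"
  proof (rule ccontr)
    assume "\<not> ?thesis"
    hence "smin n m = 0" unfolding smin_def by (intro sum.neutral) auto
    thus False using Suc(2) by simp
  qed
  then obtain i where i: "i < n" "min (fst m i) (snd m i) \<noteq> 0" by blast
  define m' where "m' = ((\<lambda>j. fst m j - dlt i j), (\<lambda>j. snd m j - dlt i j))"
  have v': "m' \<in> valid_monos n" using Suc(3) by (auto simp: m'_def valid_monos_def)
  have "smin n m = Suc (smin n m')"
  proof -
    have "smin n m = (\<Sum>j<n. min (fst m' j) (snd m' j) + (if j = i then 1 else 0))"
      unfolding smin_def using i by (intro sum.cong refl) (auto simp: m'_def dlt_def)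
    also have "\<dots> = smin n m' + 1" using i by (simp add: sum.distrib smin_def)
    finally show ?thesis by simp
  qed
  hence "k = smin n m'" using Suc(2) by simp
  hence IH: "sadd (mon m') (sneg (mon (red m'))) \<in> (aideal n :: (mono \<Rightarrow> 'k) set)"
    using Suc(1)[of m'] v' by simp
  have rr: "red m' = red m" using i by (auto simp: red_def m'_def dlt_def fun_eq_iff)
  have st: "sadd (mon m) (sneg (mon m')) \<in> (aideal n :: (mono \<Rightarrow> 'k) set)"
    unfolding m'_def by (rule mon_step[OF Suc(3) i(1)]) (use i in auto)
  have "sadd (sadd (mon m) (sneg (mon m'))) (sadd (mon m') (sneg (mon (red m')))) \<in> (aideal n :: (mono \<Rightarrow> 'k) set)"
    by (rule ideal_add[OF aideal_ideal st IH])
  moreover have "sadd (sadd (mon m) (sneg (mon m'))) (sadd (mon m') (sneg (mon (red m')))) = (sadd (mon m) (sneg (mon (red m))) :: mono \<Rightarrow> 'k)"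
    by (simp add: sadd_def sneg_def rr fun_eq_iff)
  ultimately show ?case by simp
qed

lemma lincomb_aideal:
  assumes "finite A" "A \<subseteq> valid_monos n"
  shows "(\<lambda>r. \<Sum>m\<in>A. c m * (mon m r - mon (red m) r)) \<in> (aideal n :: (mono \<Rightarrow> 'k::field) set)"
  using assms
proof (induction A rule: finite_induct)
  case empty
  show ?case using ideal_zero[OF aideal_ideal] by (simp add: szero_def)
next
  case (insert a A)
  have "sscale (c a) (sadd (mon a) (sneg (mon (red a)))) \<in> (aideal n :: (mono \<Rightarrow> 'k) set)"
    using insert by (intro ideal_scale[OF aideal_ideal] mon_red) auto
  from ideal_add[OF aideal_ideal this insert.IH] insert(4)
  show ?case using insert(1,2) by (simp add: sadd_def sscale_def sneg_def algebra_simps)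
qed

lemma ker_aideal: assumes "f \<in> Sn n" "phi n f = 0" shows "f \<in> aideal n"
proof -
  have fin: "finite (supp f)" and sv: "supp f \<subseteq> valid_monos n" using assms by (auto simp: Sn_iff)
  define h where "h = (\<lambda>r. \<Sum>m\<in>supp f. f m * (mon m r - mon (red m) r))"
  have hA: "h \<in> aideal n" unfolding h_def by (rule lincomb_aideal[OF fin sv])
  have "h r = f r" for r
  proof -
    have "h r = (\<Sum>m\<in>supp f. f m * mon m r) - (\<Sum>m\<in>supp f. f m * mon (red m) r)"
      by (simp add: h_def right_diff_distrib sum_subtractf)
    also have "(\<Sum>m\<in>supp f. f m * mon m r) = f r"
      using fin by (simp add: mon_def if_distrib sum.delta' cong: if_cong) (auto simp: supp_def)
    also have "(\<Sum>m\<in>supp f. f m * mon (red m) r) = 0"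
    proof (cases "\<exists>m0\<in>supp f. red m0 = r")
      case False
      thus ?thesis by (intro sum.neutral) (auto simp: mon_def)
    next
      case True
      then obtain m0 where m0: "m0 \<in> supp f" "red m0 = r" by blast
      have "(\<Sum>m\<in>supp f. f m * mon (red m) r) = (\<Sum>m\<in>supp f. if dd n m = dd n m0 then f m else 0)"
      proof (rule sum.cong[OF refl])
        fix m assume "m \<in> supp f"
        hence "red m = red m0 \<longleftrightarrow> dd n m = dd n m0" using red_dd sv m0 by blast
        thus "f m * mon (red m) r = (if dd n m = dd n m0 then f m else 0)"
          using m0 by (auto simp: mon_def)
      qed
      also have "\<dots> = Poly_Mapping.lookup (phi n f) (dd n m0)" by (simp add: lookup_phi fin)
      also have "\<dots> = 0" using assms by simp
      finally show ?thesis .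
    qed
    finally show ?thesis by simp
  qed
  hence "h = f" by auto
  thus ?thesis using hA by simp
qed

lemma aideal_eq_ker: "aideal n = kerphi n"
  using aideal_ker ker_aideal by (auto simp: kerphi_def)

lemma aideal_prime: "is_prime_ideal n (aideal n :: (mono \<Rightarrow> 'k::field) set)"
  unfolding is_prime_ideal_def
proof (intro conjI allI impI)
  show "is_ideal n (aideal n :: (mono \<Rightarrow> 'k) set)" by (rule aideal_ideal)
  have "(sone :: mono \<Rightarrow> 'k) \<notin> aideal n"
  proof
    assume "(sone :: mono \<Rightarrow> 'k) \<in> aideal n"
    hence "phi n (sone :: mono \<Rightarrow> 'k) = 0" using aideal_ker[of n] by (auto simp: kerphi_def)
    thus False by (simp add: phi_sone)
  qed
  thus "(aideal n :: (mono \<Rightarrow> 'k) set) \<noteq> Sn n" using Sn_sone by blast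
  fix I J :: "(mono \<Rightarrow> 'k) set"
  assume H: "is_ideal n I \<and> is_ideal n J \<and> (\<forall>a\<in>I. \<forall>b\<in>J. smult a b \<in> aideal n)"
  show "I \<subseteq> aideal n \<or> J \<subseteq> aideal n"
  proof (rule ccontr)
    assume "\<not> (I \<subseteq> aideal n \<or> J \<subseteq> aideal n)"
    then obtain a b where ab: "a \<in> I" "a \<notin> aideal n" "b \<in> J" "b \<notin> aideal n" by blast
    have S: "a \<in> Sn n" "b \<in> Sn n" using H ab ideal_sub by blast+
    have "phi n a \<noteq> 0" "phi n b \<noteq> 0" using ker_aideal S ab by blast+
    hence "phi n a * phi n b \<noteq> 0" by simp
    moreover have "smult a b \<in> aideal n" using H ab by blast
    hence "phi n (smult a b) = 0" using aideal_ker by (auto simp: kerphi_def)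
    moreover have "phi n (smult a b) = phi n a * phi n b" using S by (intro phi_mult) (simp_all add: Sn_fin)
    ultimately show False by simp
  qed
qed

definition comm :: "(mono \<Rightarrow> 'k::field) \<Rightarrow> (mono \<Rightarrow> 'k) \<Rightarrow> (mono \<Rightarrow> 'k)" where
  "comm u v = sadd (smult u v) (sneg (smult v u))"

lemma comm_aideal: assumes "u \<in> Sn n" "v \<in> Sn n" shows "comm u v \<in> aideal n"
proof (rule ker_aideal)
  show "comm u v \<in> Sn n" using assms by (simp add: comm_def Sn_sadd Sn_sneg Sn_smult)
  show "phi n (comm u v) = 0" using assms
    by (simp add: comm_def phi_add phi_neg phi_mult Sn_fin Sn_smult finite_supp_smult mult.commute)
qed

lemma egen_comm: "egen i = comm (geny i) (genx i)"
  by (simp add: egen_def comm_def yx_one)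

context
  fixes \<sigma> :: "(mono \<Rightarrow> 'k::field) \<Rightarrow> (mono \<Rightarrow> 'k)" and n :: nat
  assumes G: "\<sigma> \<in> Gn n"
begin

lemma G_bij: "bij_betw \<sigma> (Sn n) (Sn n)" using G by (simp add: Gn_def)
lemma G_add: "f \<in> Sn n \<Longrightarrow> g \<in> Sn n \<Longrightarrow> \<sigma> (sadd f g) = sadd (\<sigma> f) (\<sigma> g)" using G by (simp add: Gn_def)
lemma G_mult: "f \<in> Sn n \<Longrightarrow> g \<in> Sn n \<Longrightarrow> \<sigma> (smult f g) = smult (\<sigma> f) (\<sigma> g)" using G by (simp add: Gn_def)
lemma G_Sn: "f \<in> Sn n \<Longrightarrow> \<sigma> f \<in> Sn n" using G_bij by (auto simp: bij_betw_def)
lemma G_surj: "g \<in> Sn n \<Longrightarrow> \<exists>f\<in>Sn n. g = \<sigma> f" using G_bij by (auto simp: bij_betw_def)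

lemma G_zero: "\<sigma> szero = szero"
proof -
  have "\<sigma> (sadd szero szero) = sadd (\<sigma> szero) (\<sigma> szero)" by (rule G_add) (simp_all add: Sn_szero)
  moreover have "sadd szero szero = (szero :: mono \<Rightarrow> 'k)" by (simp add: sadd_def szero_def)
  ultimately have "\<sigma> szero = sadd (\<sigma> szero) (\<sigma> szero)" by simp
  hence "\<sigma> szero m = \<sigma> szero m + \<sigma> szero m" for m by (metis sadd_def)
  hence "\<sigma> szero m = 0" for m by (metis add_cancel_right_right)
  thus ?thesis by (simp add: szero_def fun_eq_iff)
qed

lemma G_neg: assumes "f \<in> Sn n" shows "\<sigma> (sneg f) = sneg (\<sigma> f)"
proof -
  have "\<sigma> (sadd f (sneg f)) = sadd (\<sigma> f) (\<sigma> (sneg f))" by (rule G_add) (simp_all add: assms Sn_sneg)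
  moreover have "sadd f (sneg f) = szero" by (simp add: sadd_def sneg_def szero_def)
  ultimately have "sadd (\<sigma> f) (\<sigma> (sneg f)) = szero" using G_zero by simp
  hence "\<sigma> f m + \<sigma> (sneg f) m = 0" for m by (metis sadd_def szero_def)
  hence "\<sigma> (sneg f) m = - \<sigma> f m" for m by (metis add_eq_0_iff)
  thus ?thesis by (simp add: sneg_def fun_eq_iff)
qed

lemma G_comm: "u \<in> Sn n \<Longrightarrow> v \<in> Sn n \<Longrightarrow> \<sigma> (comm u v) = comm (\<sigma> u) (\<sigma> v)"
  by (simp add: comm_def G_add G_neg G_mult Sn_smult Sn_sneg)

lemma G_aideal: "\<sigma> ` aideal n = aideal n"
proof
  define I where "I = {f \<in> Sn n. \<sigma> f \<in> aideal n}"
  have AS: "aideal n \<subseteq> Sn n" using aideal_ideal ideal_sub by blast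
  have "is_ideal n I" unfolding is_ideal_def
  proof (intro conjI ballI)
    show "I \<subseteq> Sn n" by (auto simp: I_def)
    show "szero \<in> I" by (simp add: I_def Sn_szero G_zero ideal_zero[OF aideal_ideal])
    show "sadd a b \<in> I" if "a \<in> I" "b \<in> I" for a b
      using that by (auto simp: I_def Sn_sadd G_add intro: ideal_add[OF aideal_ideal])
    show "sneg a \<in> I" if "a \<in> I" for a
      using that by (auto simp: I_def Sn_sneg G_neg intro: ideal_neg[OF aideal_ideal])
    show "smult r a \<in> I" if "r \<in> Sn n" "a \<in> I" for r a
      using that by (auto simp: I_def Sn_smult G_mult G_Sn intro: ideal_multl[OF aideal_ideal])
    show "smult a r \<in> I" if "r \<in> Sn n" "a \<in> I" for r a
      using that by (auto simp: I_def Sn_smult G_mult G_Sn intro: ideal_multr[OF aideal_ideal])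
  qed
  moreover have "\<forall>i<n. egen i \<in> I"
  proof (intro allI impI)
    fix i assume i: "i < n"
    have "\<sigma> (egen i) = comm (\<sigma> (geny i)) (\<sigma> (genx i))"
      unfolding egen_comm by (rule G_comm) (simp_all add: genx_Sn geny_Sn i)
    also have "\<dots> \<in> aideal n" by (rule comm_aideal) (simp_all add: G_Sn genx_Sn geny_Sn i)
    finally show "egen i \<in> I" using egen_Sn[OF i] by (simp add: I_def)
  qed
  ultimately have "aideal n \<subseteq> I" by (rule aideal_min)
  thus "\<sigma> ` aideal n \<subseteq> aideal n" by (auto simp: I_def)
  define T where "T = \<sigma> ` aideal n"
  have TS: "T \<subseteq> Sn n" using AS G_Sn by (auto simp: T_def)
  have "is_ideal n T" unfolding is_ideal_def
  proof (intro conjI ballI)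
    show "T \<subseteq> Sn n" by (rule TS)
    show "szero \<in> T" unfolding T_def using G_zero ideal_zero[OF aideal_ideal] by (metis image_eqI)
    show "sadd a b \<in> T" if ab: "a \<in> T" "b \<in> T" for a b
    proof -
      obtain a' b' where "a' \<in> aideal n" "b' \<in> aideal n" "a = \<sigma> a'" "b = \<sigma> b'" using ab by (auto simp: T_def)
      moreover hence "sadd a b = \<sigma> (sadd a' b')" using AS G_add[of a' b'] by (metis subsetD)
      ultimately show ?thesis unfolding T_def using ideal_add[OF aideal_ideal] by blast
    qed
    show "sneg a \<in> T" if ab: "a \<in> T" for a
    proof -
      obtain a' where "a' \<in> aideal n" "a = \<sigma> a'" using ab by (auto simp: T_def)
      moreover hence "sneg a = \<sigma> (sneg a')" using AS G_neg[of a'] by (metis subsetD)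
      ultimately show ?thesis unfolding T_def using ideal_neg[OF aideal_ideal] by blast
    qed
    show "smult r a \<in> T" if ab: "r \<in> Sn n" "a \<in> T" for r a
    proof -
      obtain a' where a': "a' \<in> aideal n" "a = \<sigma> a'" using ab by (auto simp: T_def)
      obtain r' where r': "r' \<in> Sn n" "r = \<sigma> r'" using G_surj ab(1) by blast
      have "smult r a = \<sigma> (smult r' a')" using AS G_mult[of r' a'] a' r' by (metis subsetD)
      thus ?thesis unfolding T_def using ideal_multl[OF aideal_ideal r'(1) a'(1)] by blast
    qed
    show "smult a r \<in> T" if ab: "r \<in> Sn n" "a \<in> T" for r a
    proof -
      obtain a' where a': "a' \<in> aideal n" "a = \<sigma> a'" using ab by (auto simp: T_def)
      obtain r' where r': "r' \<in> Sn n" "r = \<sigma> r'" using G_surj ab(1) by blast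
      have "smult a r = \<sigma> (smult a' r')" using AS G_mult[of a' r'] a' r' by (metis subsetD)
      thus ?thesis unfolding T_def using ideal_multr[OF aideal_ideal r'(1) a'(1)] by blast
    qed
  qed
  moreover have "\<forall>i<n. egen i \<in> T"
  proof (intro allI impI)
    fix i assume i: "i < n"
    obtain x' where x': "x' \<in> Sn n" "genx i = \<sigma> x'" using G_surj genx_Sn[OF i] by blast
    obtain y' where y': "y' \<in> Sn n" "geny i = \<sigma> y'" using G_surj geny_Sn[OF i] by blast
    have "egen i = \<sigma> (comm y' x')" unfolding egen_comm x' y' by (rule G_comm[symmetric]) fact+
    moreover have "comm y' x' \<in> aideal n" by (rule comm_aideal) fact+
    ultimately show "egen i \<in> T" unfolding T_def by blast
  qed
  ultimately have "aideal n \<subseteq> T" by (rule aideal_min)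
  thus "aideal n \<subseteq> \<sigma> ` aideal n" by (simp add: T_def)
qed

end

section \<open>Some automorphisms\<close>

lemma mult_aut:
  fixes c :: "mono \<Rightarrow> 'k::field"
  assumes cm: "\<And>p q. c (bmul p q) = c p * c q" and c0: "c u0 = 1" and cnz: "\<And>m. c m \<noteq> 0"
  shows "(\<lambda>f. \<lambda>m. c m * f m) \<in> Gn n"
proof -
  let ?s = "\<lambda>f::mono \<Rightarrow> 'k. \<lambda>m. c m * f m"
  let ?t = "\<lambda>f::mono \<Rightarrow> 'k. \<lambda>m. f m / c m"
  have supp_s: "supp (?s f) = supp f" for f using cnz by (auto simp: supp_def)
  have supp_t: "supp (?t f) = supp f" for f using cnz by (auto simp: supp_def)
  have sS: "?s f \<in> Sn n" if "f \<in> Sn n" for f using that supp_s by (simp add: Sn_iff)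
  have tS: "?t f \<in> Sn n" if "f \<in> Sn n" for f using that supp_t by (simp add: Sn_iff)
  have "bij_betw ?s (Sn n) (Sn n)"
    by (rule bij_betw_byWitness[where f'="?t"]) (use sS tS cnz in auto)
  moreover have "?s (smult f g) = smult (?s f) (?s g)" if "f \<in> Sn n" "g \<in> Sn n" for f g
  proof
    fix m
    have fin: "finite (supp f)" "finite (supp g)" using that by (auto simp: Sn_iff)
    have "smult (?s f) (?s g) m = (\<Sum>p\<in>supp f. \<Sum>q\<in>supp g. if bmul p q = m then c p * f p * (c q * g q) else 0)"
      by (rule smult_eq) (use fin supp_s in auto)
    also have "\<dots> = (\<Sum>p\<in>supp f. \<Sum>q\<in>supp g. c m * (if bmul p q = m then f p * g q else 0))"
      by (intro sum.cong refl) (auto simp: cm[symmetric] ac_simps)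
    also have "\<dots> = c m * smult f g m"
      by (simp add: sum_distrib_left smult_eq[OF fin(1) _ fin(2)])
    finally show "?s (smult f g) m = smult (?s f) (?s g) m" by simp
  qed
  moreover have "?s sone = sone" using c0 by (auto simp: sone_def u0_def[symmetric] fun_eq_iff)
  ultimately show ?thesis
    by (auto simp: Gn_def sadd_def sscale_def algebra_simps)
qed

lemma perm_aut:
  fixes pm :: "mono \<Rightarrow> mono"
  assumes inv: "\<And>m. pm (pm m) = m" and pb: "\<And>p q. pm (bmul p q) = bmul (pm p) (pm q)"
    and pu: "pm u0 = u0" and pv: "\<And>m. m \<in> valid_monos n \<Longrightarrow> pm m \<in> valid_monos n"
  shows "(\<lambda>f::mono \<Rightarrow> 'k::field. \<lambda>m. f (pm m)) \<in> Gn n"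
proof -
  let ?s = "\<lambda>f::mono \<Rightarrow> 'k. \<lambda>m. f (pm m)"
  have ip: "inj pm" by (rule injI) (metis inv)
  have supp_s: "supp (?s f) = pm ` supp f" for f
  proof
    show "supp (?s f) \<subseteq> pm ` supp f"
    proof
      fix m assume "m \<in> supp (?s f)"
      hence "pm m \<in> supp f" by (simp add: supp_def)
      hence "pm (pm m) \<in> pm ` supp f" by (rule imageI)
      thus "m \<in> pm ` supp f" by (simp add: inv)
    qed
    show "pm ` supp f \<subseteq> supp (?s f)" by (auto simp: supp_def inv)
  qed
  have sS: "?s f \<in> Sn n" if "f \<in> Sn n" for f using that supp_s pv by (auto simp: Sn_iff)
  have "bij_betw ?s (Sn n) (Sn n)"
    by (rule bij_betw_byWitness[where f'="?s"]) (use sS inv in \<open>auto simp: o_def\<close>)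
  moreover have "?s (smult f g) = smult (?s f) (?s g)" if "f \<in> Sn n" "g \<in> Sn n" for f g
  proof
    fix m
    have fin: "finite (supp f)" "finite (supp g)" using that by (auto simp: Sn_iff)
    have "smult (?s f) (?s g) m = (\<Sum>p\<in>pm ` supp f. \<Sum>q\<in>pm ` supp g. if bmul p q = m then f (pm p) * g (pm q) else 0)"
      by (rule smult_eq) (use fin supp_s in auto)
    also have "\<dots> = (\<Sum>p\<in>supp f. \<Sum>q\<in>supp g. if bmul (pm p) (pm q) = m then f (pm (pm p)) * g (pm (pm q)) else 0)"
      by (simp add: sum.reindex inj_on_subset[OF ip] o_def)
    also have "\<dots> = (\<Sum>p\<in>supp f. \<Sum>q\<in>supp g. if bmul p q = pm m then f p * g q else 0)"
      by (intro sum.cong refl) (metis (no_types, lifting) inv pb)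
    also have "\<dots> = smult f g (pm m)"
      by (simp add: smult_eq[OF fin(1) _ fin(2)])
    finally show "?s (smult f g) m = smult (?s f) (?s g) m" by simp
  qed
  moreover have "?s sone = sone"
  proof
    fix m
    have "pm m = u0 \<longleftrightarrow> m = u0" by (metis inv pu)
    thus "?s sone m = sone m" by (simp add: sone_def u0_def[symmetric])
  qed
  ultimately show ?thesis
    by (auto simp: Gn_def sadd_def sscale_def o_def)
qed

definition sw :: "nat \<Rightarrow> nat \<Rightarrow> nat \<Rightarrow> nat" where
  "sw i j k = (if k = i then j else if k = j then i else k)"

definition pmsw :: "nat \<Rightarrow> nat \<Rightarrow> mono \<Rightarrow> mono" where
  "pmsw i j m = (fst m \<circ> sw i j, snd m \<circ> sw i j)"

lemma swap_aut:
  assumes "i < n" "j < n"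
  shows "(\<lambda>f::mono \<Rightarrow> 'k::field. \<lambda>m. f (pmsw i j m)) \<in> Gn n"
  by (rule perm_aut) (use assms in \<open>auto simp: pmsw_def sw_def bmul_def u0_def valid_monos_def fun_eq_iff\<close>)

lemma egen_explicit: "egen i = (\<lambda>m. (if m = u0 then 1 else 0) - (if m = (dlt i, dlt i) then 1 else (0::'k::field)))"
  by (simp add: egen_def xy_mon fun_eq_iff sadd_def sneg_def sone_mon mon_def)

lemma swap_egen: "(\<lambda>m. egen i (pmsw i j m)) = (egen j :: mono \<Rightarrow> 'k::field)"
proof -
  have pinv: "pmsw i j (pmsw i j m) = m" for m
    by (auto simp: pmsw_def sw_def fun_eq_iff prod_eq_iff)
  have eqv: "pmsw i j m = X \<longleftrightarrow> m = pmsw i j X" for m X by (metis pinv)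
  have pu: "pmsw i j u0 = u0" by (simp add: pmsw_def u0_def o_def)
  have pd: "pmsw i j (dlt i, dlt i) = (dlt j, dlt j)"
    by (auto simp: pmsw_def dlt_def sw_def fun_eq_iff)
  show ?thesis unfolding egen_explicit by (simp only: eqv pu pd)
qed

definition tor :: "nat \<Rightarrow> 'k::field \<Rightarrow> mono \<Rightarrow> 'k" where
  "tor i l m = l powi (int (fst m i) - int (snd m i))"

lemma tor_aut:
  assumes "l \<noteq> 0"
  shows "(\<lambda>f. \<lambda>m. tor i l m * f m) \<in> Gn n"
proof (rule mult_aut)
  show "tor i l (bmul p q) = tor i l p * tor i l q" for p q
  proof -
    have "int (fst (bmul p q) i) - int (snd (bmul p q) i) = (int (fst p i) - int (snd p i)) + (int (fst q i) - int (snd q i))"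
      by (auto simp: bmul_def min_def of_nat_diff)
    thus ?thesis using assms by (simp add: tor_def power_int_add)
  qed
  show "tor i l u0 = 1" by (simp add: tor_def u0_def)
  show "tor i l m \<noteq> 0" for m using assms by (simp add: tor_def)
qed

definition lin :: "nat \<Rightarrow> ((mono \<Rightarrow> 'k::field) \<Rightarrow> (mono \<Rightarrow> 'k)) \<Rightarrow> bool" where
  "lin n F \<longleftrightarrow> (\<forall>f\<in>Sn n. \<forall>g\<in>Sn n. F (sadd f g) = sadd (F f) (F g)) \<and>
     (\<forall>f\<in>Sn n. \<forall>c. F (sscale c f) = sscale c (F f))"

lemma lin_zero: fixes F :: "(mono \<Rightarrow> 'k::field) \<Rightarrow> (mono \<Rightarrow> 'k)" shows "lin n F \<Longrightarrow> F szero = szero"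
proof -
  assume "lin n F"
  hence "F (sscale 0 szero) = sscale 0 (F szero)" by (simp add: lin_def Sn_szero)
  moreover have "sscale 0 szero = (szero :: mono \<Rightarrow> 'k)" "sscale 0 (F szero) = szero"
    by (simp_all add: sscale_def szero_def fun_eq_iff)
  ultimately show ?thesis by simp
qed

lemma lin_eq:
  fixes F G :: "(mono \<Rightarrow> 'k::field) \<Rightarrow> (mono \<Rightarrow> 'k)"
  assumes F: "lin n F" and G: "lin n G" and M: "\<And>m. m \<in> valid_monos n \<Longrightarrow> F (mon m) = G (mon m)"
    and h: "h \<in> Sn n"
  shows "F h = G h"
proof -
  have "finite (supp h)" "supp h \<subseteq> valid_monos n" using h by (auto simp: Sn_iff)
  thus ?thesis
  proof (rule fin_induct[where Q="\<lambda>h. F h = G h"])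
    show "F szero = G szero" using lin_zero[OF F] lin_zero[OF G] by simp
  next
    fix m :: mono and c :: 'k and g :: "mono \<Rightarrow> 'k" assume 2: "m \<in> valid_monos n" "finite (supp g)" "supp g \<subseteq> valid_monos n" "m \<notin> supp g" "F g = G g"
    have gS: "g \<in> Sn n" using 2 by (simp add: Sn_iff)
    have mS: "sscale c (mon m) \<in> Sn n" using 2 by (simp add: Sn_mon Sn_sscale)
    have "F (sadd (sscale c (mon m)) g) = sadd (sscale c (F (mon m))) (F g)"
      using F mS gS Sn_mon[OF 2(1)] unfolding lin_def by metis
    moreover have "G (sadd (sscale c (mon m)) g) = sadd (sscale c (G (mon m))) (G g)"
      using G mS gS Sn_mon[OF 2(1)] unfolding lin_def by metis
    ultimately show "F (sadd (sscale c (mon m)) g) = G (sadd (sscale c (mon m)) g)" using 2 M by simp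
  qed
qed

lemma lin_multl: "a \<in> Sn n \<Longrightarrow> lin n (\<lambda>h. smult a h)"
  by (auto simp: lin_def smult_add_right smult_scale_right Sn_fin)
lemma lin_multr: "a \<in> Sn n \<Longrightarrow> lin n (\<lambda>h. smult h a)"
  by (auto simp: lin_def smult_add_left smult_scale_left Sn_fin)
lemma lin_comp: "lin n F \<Longrightarrow> lin n G \<Longrightarrow> (\<And>f. f \<in> Sn n \<Longrightarrow> G f \<in> Sn n) \<Longrightarrow> lin n (\<lambda>h. F (G h))"
  by (auto simp: lin_def Sn_sadd Sn_sscale)

section \<open>Supports and commutation\<close>

definition sup_on :: "nat set \<Rightarrow> (mono \<Rightarrow> 'k::field) \<Rightarrow> bool" where
  "sup_on T f \<longleftrightarrow> (\<forall>m. f m \<noteq> 0 \<longrightarrow> (\<forall>j. j \<notin> T \<longrightarrow> fst m j = 0 \<and> snd m j = 0))"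

lemma smult_comm_disj:
  fixes f g :: "mono \<Rightarrow> 'k::field"
  assumes fin: "finite (supp f)" "finite (supp g)"
    and s: "sup_on T f" "sup_on U g" "T \<inter> U = {}"
  shows "smult f g = smult g f"
proof
  fix m
  have bc: "bmul p q = bmul q p" if "p \<in> supp f" "q \<in> supp g" for p q
  proof -
    have D: "(fst p j = 0 \<and> snd p j = 0) \<or> (fst q j = 0 \<and> snd q j = 0)" for j
    proof (cases "j \<in> T")
      case True hence "j \<notin> U" using s(3) by auto
      thus ?thesis using s(2)[unfolded sup_on_def, rule_format, of q j] that by (simp add: supp_def)
    next
      case False
      thus ?thesis using s(1)[unfolded sup_on_def, rule_format, of p j] that by (simp add: supp_def)
    qed
    have "fst (bmul p q) j = fst (bmul q p) j \<and> snd (bmul p q) j = snd (bmul q p) j" for j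
      using D[of j] by (auto simp: bmul_def)
    thus ?thesis by (simp add: prod_eq_iff fun_eq_iff)
  qed
  have "smult f g m = (\<Sum>p\<in>supp f. \<Sum>q\<in>supp g. if bmul p q = m then f p * g q else 0)"
    by (rule smult_eq) (use fin in auto)
  also have "\<dots> = (\<Sum>q\<in>supp g. \<Sum>p\<in>supp f. if bmul q p = m then g q * f p else 0)"
    by (subst sum.swap) (intro sum.cong refl, simp add: bc mult.commute)
  also have "\<dots> = smult g f m"
    by (rule smult_eq[symmetric]) (use fin in auto)
  finally show "smult f g m = smult g f m" .
qed

lemma sup_on_mon: "sup_on T (mon m) \<longleftrightarrow> (\<forall>j. j \<notin> T \<longrightarrow> fst m j = 0 \<and> snd m j = 0)"
  by (auto simp: sup_on_def mon_def simp del: split_paired_All)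

lemma sup_on_sadd: "sup_on T f \<Longrightarrow> sup_on T g \<Longrightarrow> sup_on T (sadd f g)"
  unfolding sup_on_def sadd_def by (metis add.right_neutral add.left_neutral)
lemma sup_on_sneg: "sup_on T f \<Longrightarrow> sup_on T (sneg f)"
  by (auto simp: sup_on_def sneg_def)
lemma sup_on_sscale: "sup_on T f \<Longrightarrow> sup_on T (sscale c f)"
  by (auto simp: sup_on_def sscale_def)

lemma sup_on_smult:
  assumes "finite (supp f)" "finite (supp g)" "sup_on T f" "sup_on T g"
  shows "sup_on T (smult f g)"
  unfolding sup_on_def
proof (intro allI impI)
  fix m j assume "smult f g m \<noteq> 0" "j \<notin> T"
  hence "m \<in> supp (smult f g)" by (simp add: supp_def)
  then obtain p q where "p \<in> supp f" "q \<in> supp g" "m = bmul p q"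
    using supp_smult[OF assms(1,2)] by auto
  moreover have "fst p j = 0 \<and> snd p j = 0" using assms(3)[unfolded sup_on_def, rule_format, of p j] \<open>j \<notin> T\<close> \<open>p \<in> supp f\<close> by (simp add: supp_def)
  moreover have "fst q j = 0 \<and> snd q j = 0" using assms(4)[unfolded sup_on_def, rule_format, of q j] \<open>j \<notin> T\<close> \<open>q \<in> supp g\<close> by (simp add: supp_def)
  ultimately show "fst m j = 0 \<and> snd m j = 0" by (simp add: bmul_def)
qed

lemma egen_sup: "sup_on {i} (egen i)"
  unfolding sup_on_def egen_explicit
proof (intro allI impI)
  fix m :: mono and j assume "(if m = u0 then 1 else 0) - (if m = (dlt i, dlt i) then 1 else (0::'a)) \<noteq> 0" "j \<notin> {i}"
  hence "m = u0 \<or> m = (dlt i, dlt i)" by (auto split: if_splits)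
  thus "fst m j = 0 \<and> snd m j = 0" using \<open>j \<notin> {i}\<close> by (auto simp: u0_def dlt_def)
qed

definition Rstr :: "nat \<Rightarrow> (mono \<Rightarrow> 'k::field) \<Rightarrow> (mono \<Rightarrow> 'k)" where
  "Rstr i h = (\<lambda>m. if fst m i = 0 \<and> snd m i = 0 then h m else 0)"

lemma Rstr_Sn: "h \<in> Sn n \<Longrightarrow> Rstr i h \<in> Sn n"
proof -
  assume "h \<in> Sn n"
  moreover have "supp (Rstr i h) \<subseteq> supp h" by (auto simp: supp_def Rstr_def)
  ultimately show ?thesis by (auto simp: Sn_iff intro: finite_subset)
qed

lemma lin_Rstr: "lin n (Rstr i)"
  by (auto simp: lin_def Rstr_def sadd_def sscale_def fun_eq_iff)

lemma egen_mon: "egen i = sadd sone (sneg (mon (dlt i, dlt i)))"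
  by (simp add: egen_def xy_mon)

lemma E_mon: "smult (egen i) (mon m) = sadd (mon m) (sneg (mon (bmul (dlt i, dlt i) m)))"
  by (simp add: egen_mon smult_add_left smult_neg_left smult_sone_left smult_mon_mon)

lemma mon_E: "smult (mon m) (egen i) = sadd (mon m) (sneg (mon (bmul m (dlt i, dlt i))))"
  by (simp add: egen_mon smult_add_right smult_neg_right smult_sone_right smult_mon_mon)

lemma sadd_neg_self: "sadd f (sneg f) = szero"
  by (simp add: sadd_def sneg_def szero_def fun_eq_iff)

lemma E_idem: "smult (egen i) (egen i) = (egen i :: mono \<Rightarrow> 'k::field)"
proof -
  have "bmul (dlt i, dlt i) (dlt i, dlt i) = (dlt i, dlt i)" by (auto simp: bmul_def dlt_def fun_eq_iff)
  hence "smult (mon (dlt i, dlt i)) (egen i) = (szero :: mono \<Rightarrow> 'k)"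
    by (simp add: mon_E sadd_neg_self)
  have fE: "finite (supp (egen i :: mono \<Rightarrow> 'k))"
    by (rule finite_subset[of _ "{u0, (dlt i, dlt i)}"]) (auto simp: egen_explicit supp_def split: if_splits)
  have "smult (sadd sone (sneg (mon (dlt i, dlt i)))) (egen i) = sadd (smult sone (egen i)) (smult (sneg (mon (dlt i, dlt i))) (egen i :: mono \<Rightarrow> 'k))"
    by (rule smult_add_left) (simp_all add: fE)
  also have "\<dots> = sadd (egen i) (sneg (smult (mon (dlt i, dlt i)) (egen i :: mono \<Rightarrow> 'k)))"
    by (simp add: smult_sone_left smult_neg_left fE)
  also have "\<dots> = egen i" using \<open>smult (mon (dlt i, dlt i)) (egen i) = szero\<close>
    by (simp add: sadd_def sneg_def szero_def)
  finally show ?thesis by (simp only: egen_mon[symmetric])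
qed

lemma E_mon_zero: "fst m i > 0 \<Longrightarrow> smult (egen i) (mon m) = szero"
proof -
  assume "fst m i > 0"
  hence "bmul (dlt i, dlt i) m = m" by (auto simp: bmul_def dlt_def fun_eq_iff prod_eq_iff min_def)
  thus ?thesis by (simp add: E_mon sadd_neg_self)
qed

lemma mon_E_zero: "snd m i > 0 \<Longrightarrow> smult (mon m) (egen i) = szero"
proof -
  assume "snd m i > 0"
  hence "bmul m (dlt i, dlt i) = m" by (auto simp: bmul_def dlt_def fun_eq_iff prod_eq_iff min_def)
  thus ?thesis by (simp add: mon_E sadd_neg_self)
qed

lemma sandwich:
  fixes h :: "mono \<Rightarrow> 'k::field"
  assumes i: "i < n" and h: "h \<in> Sn n"
  shows "smult (smult (egen i) h) (egen i) = smult (egen i) (Rstr i h)"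
proof -
  have ES: "(egen i :: mono \<Rightarrow> 'k) \<in> Sn n" by (rule egen_Sn[OF i])
  have fE: "finite (supp (egen i :: mono \<Rightarrow> 'k))" using ES by (simp add: Sn_fin)
  show ?thesis
  proof (rule lin_eq[OF _ _ _ h])
    show "lin n (\<lambda>h. smult (smult (egen i) h) (egen i :: mono \<Rightarrow> 'k))"
      by (rule lin_comp[OF lin_multr[OF ES] lin_multl[OF ES]]) (simp add: Sn_smult ES)
    show "lin n (\<lambda>h. smult (egen i) (Rstr i h :: mono \<Rightarrow> 'k))"
      by (rule lin_comp[OF lin_multl[OF ES] lin_Rstr]) (simp add: Rstr_Sn)
    fix m assume mv: "m \<in> valid_monos n"
    show "smult (smult (egen i) (mon m)) (egen i) = smult (egen i) (Rstr i (mon m) :: mono \<Rightarrow> 'k)"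
    proof (cases "fst m i = 0 \<and> snd m i = 0")
      case True
      hence R: "Rstr i (mon m) = (mon m :: mono \<Rightarrow> 'k)" by (auto simp: Rstr_def mon_def fun_eq_iff)
      have "sup_on (- {i}) (mon m :: mono \<Rightarrow> 'k)" using True by (auto simp: sup_on_mon)
      hence C: "smult (egen i) (mon m) = smult (mon m) (egen i :: mono \<Rightarrow> 'k)"
        by (intro smult_comm_disj[OF fE _ egen_sup]) auto
      have "smult (smult (egen i) (mon m)) (egen i) = smult (mon m) (smult (egen i) (egen i :: mono \<Rightarrow> 'k))"
        unfolding C by (rule smult_assoc) (simp_all add: fE)
      also have "\<dots> = smult (egen i) (mon m)" by (simp add: E_idem C)
      finally show ?thesis using R by simp
    next
      case False
      hence R: "Rstr i (mon m) = (szero :: mono \<Rightarrow> 'k)" by (auto simp: Rstr_def mon_def fun_eq_iff szero_def)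
      show ?thesis
      proof (cases "fst m i > 0")
        case True
        thus ?thesis by (simp add: R E_mon_zero smult_zero_left smult_zero_right)
      next
        case False
        hence "snd m i > 0" using \<open>\<not> (fst m i = 0 \<and> snd m i = 0)\<close> by simp
        hence "smult (mon m) (egen i) = (szero :: mono \<Rightarrow> 'k)" by (rule mon_E_zero)
        moreover have "smult (smult (egen i) (mon m)) (egen i) = smult (egen i) (smult (mon m) (egen i :: mono \<Rightarrow> 'k))"
          by (rule smult_assoc) (simp_all add: fE)
        ultimately show ?thesis by (simp add: R smult_zero_right)
      qed
    qed
  qed
qed

lemma prime_step:
  fixes g :: "mono \<Rightarrow> 'k::field"
  assumes P: "is_prime_ideal n P" and i: "i < n" and gS: "g \<in> Sn n" and gT: "sup_on T g" "i \<notin> T"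
    and eg: "smult (egen i) g \<in> P"
  shows "egen i \<in> P \<or> g \<in> P"
proof (rule prime_lemma[OF P egen_Sn[OF i] gS])
  have IP: "is_ideal n P" using P by (simp add: is_prime_ideal_def)
  have ES: "(egen i :: mono \<Rightarrow> 'k) \<in> Sn n" by (rule egen_Sn[OF i])
  have fE: "finite (supp (egen i :: mono \<Rightarrow> 'k))" and fg: "finite (supp g)" using ES gS by (simp_all add: Sn_fin)
  show "\<forall>s\<in>Sn n. smult (smult (egen i) s) g \<in> P"
  proof
    fix s :: "mono \<Rightarrow> 'k" assume sS: "s \<in> Sn n"
    have "finite (supp s)" "supp s \<subseteq> valid_monos n" using sS by (auto simp: Sn_iff)
    thus "smult (smult (egen i) s) g \<in> P"
    proof (rule fin_induct[where Q="\<lambda>s. smult (smult (egen i) s) g \<in> P"])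
      show "smult (smult (egen i) szero) g \<in> P" by (simp add: smult_zero_left smult_zero_right ideal_zero[OF IP])
    next
      fix m :: mono and c :: 'k and s :: "mono \<Rightarrow> 'k"
      assume mv: "m \<in> valid_monos n" and fs: "finite (supp s)" "supp s \<subseteq> valid_monos n"
        and IH: "smult (smult (egen i) s) g \<in> P"
      define mi :: mono where "mi = ((\<lambda>j. if j = i then fst m j else 0), (\<lambda>j. if j = i then snd m j else 0))"
      define mo :: mono where "mo = ((\<lambda>j. if j = i then 0 else fst m j), (\<lambda>j. if j = i then 0 else snd m j))"
      have bm: "bmul mo mi = m" by (auto simp: bmul_def mo_def mi_def fun_eq_iff prod_eq_iff)
      have vmi: "mi \<in> valid_monos n" "mo \<in> valid_monos n" using mv by (auto simp: valid_monos_def mi_def mo_def)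
      have fm: "finite (supp (mon p :: mono \<Rightarrow> 'k))" for p by simp
      have C1: "smult (mon mi) g = smult g (mon mi)"
        by (rule smult_comm_disj[of _ _ "{i}" T]) (use fg gT in \<open>auto simp: sup_on_mon mi_def\<close>)
      have C2: "smult (egen i) (mon mo) = smult (mon mo) (egen i :: mono \<Rightarrow> 'k)"
        by (rule smult_comm_disj[of _ _ "{i}" "- {i}"]) (use fE egen_sup in \<open>auto simp: sup_on_mon mo_def\<close>)
      have "smult (smult (egen i) (mon m)) g = smult (smult (egen i) (smult (mon mo) (mon mi))) g"
        by (simp add: smult_mon_mon bm)
      also have "\<dots> = smult (egen i) (smult (mon mo) (smult (mon mi) g))"
        by (simp add: smult_assoc fE fg finite_supp_smult)
      also have "\<dots> = smult (smult (egen i) (mon mo)) (smult g (mon mi))"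
        by (simp add: smult_assoc fE fg finite_supp_smult C1)
      also have "\<dots> = smult (mon mo) (smult (smult (egen i) g) (mon mi))"
        by (simp add: C2 smult_assoc fE fg finite_supp_smult)
      finally have eq: "smult (smult (egen i) (mon m)) g = smult (mon mo) (smult (smult (egen i) g) (mon mi))" .
      have M: "smult (smult (egen i) (mon m)) g \<in> P"
        unfolding eq by (intro ideal_multl[OF IP Sn_mon[OF vmi(2)]] ideal_multr[OF IP Sn_mon[OF vmi(1)]] eg)
      have "smult (smult (egen i) (sadd (sscale c (mon m)) s)) g
            = sadd (sscale c (smult (smult (egen i) (mon m)) g)) (smult (smult (egen i) s) g)"
        by (simp add: smult_add_left smult_add_right smult_scale_left smult_scale_right fE fg fs
            finite_supp_smult supp_sscale[THEN finite_subset])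
      thus "smult (smult (egen i) (sadd (sscale c (mon m)) s)) g \<in> P"
        using ideal_add[OF IP ideal_scale[OF IP M] IH] by simp
    qed
  qed
qed

lemma sw_formula:
  fixes g :: "mono \<Rightarrow> 'k::field"
  assumes fg: "finite (supp g)"
  shows "smult (smult (mon y) g) (mon x) m = (\<Sum>q\<in>supp g. if bmul (bmul y q) x = m then g q else 0)"
proof -
  define C where "C = (\<lambda>q. bmul y q) ` supp g"
  have fC: "finite C" using fg by (simp add: C_def)
  have H: "smult (mon y) g r = (\<Sum>q\<in>supp g. if bmul y q = r then g q else 0)" for r
  proof -
    have "smult (mon y) g r = (\<Sum>p\<in>{y}. \<Sum>q\<in>supp g. if bmul p q = r then mon y p * g q else 0)"
      by (rule smult_eq) (use fg in auto)
    moreover have "mon y y = (1::'k)" by (simp add: mon_def)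
    ultimately show ?thesis by (simp only: sum.insert_remove finite.emptyI sum.empty Diff_empty empty_Diff empty_iff add_0_right mult_1_left)
  qed
  have sH: "supp (smult (mon y) g) \<subseteq> C"
  proof
    fix r assume "r \<in> supp (smult (mon y) g)"
    hence "(\<Sum>q\<in>supp g. if bmul y q = r then g q else 0) \<noteq> 0" by (simp add: supp_def H)
    hence "\<exists>q\<in>supp g. bmul y q = r"
    proof (rule contrapos_np)
      assume "\<not> (\<exists>q\<in>supp g. bmul y q = r)"
      thus "(\<Sum>q\<in>supp g. if bmul y q = r then g q else 0) = 0" by (intro sum.neutral) auto
    qed
    thus "r \<in> C" by (auto simp: C_def)
  qed
  have "smult (smult (mon y) g) (mon x) m = (\<Sum>r\<in>C. \<Sum>p\<in>{x}. if bmul r p = m then smult (mon y) g r * mon x p else 0)"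
    by (rule smult_eq) (use fC sH in auto)
  also have "\<dots> = (\<Sum>r\<in>C. if bmul r x = m then smult (mon y) g r else 0)"
    by (rule sum.cong[OF refl]) (simp add: mon_def)
  also have "\<dots> = (\<Sum>r\<in>C. \<Sum>q\<in>supp g. if bmul y q = r \<and> bmul r x = m then g q else 0)"
    apply (rule sum.cong[OF refl])
    subgoal for r by (cases "bmul r x = m") (simp_all add: H)
    done
  also have "\<dots> = (\<Sum>q\<in>supp g. \<Sum>r\<in>C. if bmul y q = r \<and> bmul r x = m then g q else 0)"
    by (rule sum.swap)
  also have "\<dots> = (\<Sum>q\<in>supp g. if bmul (bmul y q) x = m then g q else 0)"
    by (intro sum.cong refl, subst sum_delta_conj) (use fC in \<open>auto simp: C_def\<close>)
  finally show ?thesis .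
qed

lemma coord_lemma:
  fixes a b k l :: nat
  assumes "a \<ge> k"
  shows "(a + 0 - min k a + l - min (k + b - min k a) l = 0 \<and> k + b - min k a + 0 - min (k + b - min k a) l = 0)
     \<longleftrightarrow> a = k \<and> b = l"
  using assms by (auto simp: min_def)

lemma step_find:
  fixes g :: "mono \<Rightarrow> 'k::field"
  assumes P: "is_prime_ideal n P" and i: "i < n" and gP: "g \<in> P" and gnz: "g \<noteq> szero"
    and gT: "sup_on (insert i T) g"
  shows "\<exists>g'. g' \<in> Sn n \<and> sup_on T g' \<and> g' \<noteq> szero \<and> smult (egen i) g' \<in> P"
proof -
  have IP: "is_ideal n P" using P by (simp add: is_prime_ideal_def)
  have gS: "g \<in> Sn n" using IP gP ideal_sub by blast
  have fg: "finite (supp g)" using gS by (simp add: Sn_fin)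
  have ne: "supp g \<noteq> {}" using gnz by (auto simp: supp_def szero_def fun_eq_iff)
  define k where "k = Min ((\<lambda>q. fst q i) ` supp g)"
  have "k \<in> (\<lambda>q. fst q i) ` supp g" unfolding k_def by (rule Min_in) (use fg ne in auto)
  then obtain ms where ms: "ms \<in> supp g" "fst ms i = k" by (metis imageE)
  have kmin: "q \<in> supp g \<Longrightarrow> k \<le> fst q i" for q using fg unfolding k_def by (auto intro: Min_le)
  define l where "l = snd ms i"
  define y :: mono where "y = ((\<lambda>j. 0), (\<lambda>j. if j = i then k else 0))"
  define x :: mono where "x = ((\<lambda>j. if j = i then l else 0), (\<lambda>j. 0))"
  have vy: "y \<in> valid_monos n" "x \<in> valid_monos n" using i by (auto simp: y_def x_def valid_monos_def)
  define h where "h = smult (smult (mon y) g) (mon x)"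
  have hP: "h \<in> P" unfolding h_def
    by (rule ideal_multr[OF IP Sn_mon[OF vy(2)]], rule ideal_multl[OF IP Sn_mon[OF vy(1)] gP])
  have hS: "h \<in> Sn n" using hP IP ideal_sub by blast
  define g' where "g' = Rstr i h"
  have g'S: "g' \<in> Sn n" unfolding g'_def by (rule Rstr_Sn[OF hS])
  have ES: "(egen i :: mono \<Rightarrow> 'k) \<in> Sn n" by (rule egen_Sn[OF i])
  have "smult (egen i) g' = smult (smult (egen i) h) (egen i)"
    unfolding g'_def by (rule sandwich[OF i hS, symmetric])
  moreover have "smult (smult (egen i) h) (egen i) \<in> P"
    by (rule ideal_multr[OF IP ES], rule ideal_multl[OF IP ES hP])
  ultimately have eP: "smult (egen i) g' \<in> P" by simp
  have hT: "sup_on (insert i T) h" unfolding h_def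
    by (intro sup_on_smult) (simp_all add: fg finite_supp_smult gT sup_on_mon x_def y_def)
  have g'T: "sup_on T g'"
    unfolding sup_on_def g'_def Rstr_def
  proof (intro allI impI)
    fix m j assume "(if fst m i = 0 \<and> snd m i = 0 then h m else 0) \<noteq> 0" "j \<notin> T"
    hence "h m \<noteq> 0" "fst m i = 0 \<and> snd m i = 0" by (auto split: if_splits)
    thus "fst m j = 0 \<and> snd m j = 0" using hT[unfolded sup_on_def, rule_format, of m j] \<open>j \<notin> T\<close>
      by (cases "j = i") auto
  qed
  define mo :: mono where "mo = ((\<lambda>j. if j = i then 0 else fst ms j), (\<lambda>j. if j = i then 0 else snd ms j))"
  have key: "bmul (bmul y q) x = mo \<longleftrightarrow> q = ms" if q: "q \<in> supp g" for q
  proof -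
    have kq: "k \<le> fst q i" using kmin[OF q] .
    define Z where "Z = bmul (bmul y q) x"
    have Zi: "fst Z i = 0 \<and> snd Z i = 0 \<longleftrightarrow> fst q i = k \<and> snd q i = l"
    proof -
      have "fst Z i = fst q i - k + l - min (snd q i) l" "snd Z i = snd q i - min (snd q i) l"
        using kq by (simp_all add: Z_def bmul_def y_def x_def min_def)
      thus ?thesis using kq by (simp add: min_def) arith
    qed
    have Zj: "fst Z j = fst q j \<and> snd Z j = snd q j" if "j \<noteq> i" for j
      using that by (simp add: Z_def bmul_def y_def x_def)
    have moi: "fst mo i = 0" "snd mo i = 0" by (simp_all add: mo_def)
    have moj: "fst mo j = fst ms j \<and> snd mo j = snd ms j" if "j \<noteq> i" for j
      using that by (simp add: mo_def)
    have "Z = mo \<longleftrightarrow> (\<forall>j. fst Z j = fst mo j \<and> snd Z j = snd mo j)"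
      by (simp add: prod_eq_iff fun_eq_iff) blast
    also have "\<dots> \<longleftrightarrow> (\<forall>j. fst q j = fst ms j \<and> snd q j = snd ms j)"
    proof
      assume A: "\<forall>j. fst Z j = fst mo j \<and> snd Z j = snd mo j"
      show "\<forall>j. fst q j = fst ms j \<and> snd q j = snd ms j"
      proof
        fix j show "fst q j = fst ms j \<and> snd q j = snd ms j"
        proof (cases "j = i")
          case True thus ?thesis using A[rule_format, of i] Zi moi ms(2) by (simp add: l_def)
        next
          case False thus ?thesis using A[rule_format, of j] Zj[OF False] moj[OF False] by simp
        qed
      qed
    next
      assume A: "\<forall>j. fst q j = fst ms j \<and> snd q j = snd ms j"
      show "\<forall>j. fst Z j = fst mo j \<and> snd Z j = snd mo j"
      proof
        fix j show "fst Z j = fst mo j \<and> snd Z j = snd mo j"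
        proof (cases "j = i")
          case True thus ?thesis using A[rule_format, of i] Zi moi ms(2) by (simp add: l_def)
        next
          case False thus ?thesis using A[rule_format, of j] Zj[OF False] moj[OF False] by simp
        qed
      qed
    qed
    also have "\<dots> \<longleftrightarrow> q = ms" by (simp add: prod_eq_iff fun_eq_iff) blast
    finally show ?thesis by (simp add: Z_def)
  qed
  have "g' mo = h mo" by (simp add: g'_def Rstr_def mo_def)
  also have "\<dots> = (\<Sum>q\<in>supp g. if bmul (bmul y q) x = mo then g q else 0)"
    unfolding h_def by (rule sw_formula[OF fg])
  also have "\<dots> = (\<Sum>q\<in>supp g. if q = ms then g q else 0)"
    by (intro sum.cong refl) (simp add: key)
  also have "\<dots> = g ms" using fg ms(1) by (simp add: sum.delta')
  finally have "g' mo \<noteq> 0" using ms(1) by (simp add: supp_def)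
  hence "g' \<noteq> szero" by (auto simp: szero_def)
  thus ?thesis using g'S g'T eP by blast
qed

lemma find_egen:
  fixes P :: "(mono \<Rightarrow> 'k::field) set"
  assumes P: "is_prime_ideal n P" and nz: "P \<noteq> {szero}"
  shows "\<exists>i<n. egen i \<in> P"
proof -
  have IP: "is_ideal n P" using P by (simp add: is_prime_ideal_def)
  have PS: "P \<noteq> Sn n" using P by (simp add: is_prime_ideal_def)
  have main: "finite T \<Longrightarrow> T \<subseteq> {..<n} \<Longrightarrow> \<forall>g. g \<in> P \<and> g \<noteq> szero \<and> sup_on T g \<longrightarrow> (\<exists>i<n. egen i \<in> P)" for T
  proof (induction T rule: finite_induct)
    case empty
    show ?case
    proof (intro allI impI, elim conjE)
      fix g :: "mono \<Rightarrow> 'k" assume g: "g \<in> P" "g \<noteq> szero" "sup_on {} g"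
      have z: "g m = 0" if "m \<noteq> u0" for m
      proof (rule ccontr)
        assume "g m \<noteq> 0"
        hence "fst m j = 0 \<and> snd m j = 0" for j using g(3)[unfolded sup_on_def, rule_format, of m j] by simp
        hence "m = u0" by (simp add: u0_def prod_eq_iff fun_eq_iff)
        thus False using that by simp
      qed
      have gu: "g u0 \<noteq> 0"
      proof
        assume "g u0 = 0"
        hence "g m = 0" for m using z by (cases "m = u0") simp_all
        hence "g = szero" by (simp add: szero_def fun_eq_iff)
        thus False using g(2) by simp
      qed
      have "sscale (inverse (g u0)) g m = sone m" for m
        using z gu by (cases "m = u0") (simp_all add: sscale_def sone_def u0_def[symmetric])
      hence "sscale (inverse (g u0)) g = sone" by (simp add: fun_eq_iff)
      moreover have "sscale (inverse (g u0)) g \<in> P" by (rule ideal_scale[OF IP g(1)])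
      ultimately have "sone \<in> P" by simp
      hence "P = Sn n" by (rule ideal_sone[OF IP])
      thus "\<exists>i<n. egen i \<in> P" using PS by simp
    qed
  next
    case (insert i T)
    show ?case
    proof (intro allI impI, elim conjE)
      fix g :: "mono \<Rightarrow> 'k" assume g: "g \<in> P" "g \<noteq> szero" "sup_on (insert i T) g"
      have i: "i < n" using insert by auto
      obtain g' where g': "g' \<in> Sn n" "sup_on T g'" "g' \<noteq> szero" "smult (egen i) g' \<in> P"
        using step_find[OF P i g] by blast
      have "egen i \<in> P \<or> g' \<in> P" by (rule prime_step[OF P i g'(1,2) insert(2) g'(4)])
      thus "\<exists>i<n. egen i \<in> P"
      proof
        assume "egen i \<in> P" thus ?thesis using i by blast
      next
        assume "g' \<in> P" thus ?thesis using insert g' by auto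
      qed
    qed
  qed
  obtain g where g: "g \<in> P" "g \<noteq> szero" using nz ideal_zero[OF IP] by blast
  have "g \<in> Sn n" using g IP ideal_sub by blast
  hence "sup_on {..<n} g" by (auto simp: sup_on_def Sn_def valid_monos_def)
  thus ?thesis using main[of "{..<n}"] g by auto
qed

lemma aideal_sub_P:
  fixes P :: "(mono \<Rightarrow> 'k::field) set"
  assumes P: "is_prime_ideal n P" and nz: "P \<noteq> {szero}"
    and inv: "\<forall>\<sigma>\<in>(Gn n :: ((mono \<Rightarrow> 'k) \<Rightarrow> _) set). \<sigma> ` P = P"
  shows "aideal n \<subseteq> P"
proof -
  have IP: "is_ideal n P" using P by (simp add: is_prime_ideal_def)
  obtain i where i: "i < n" "egen i \<in> P" using find_egen[OF P nz] by blast
  have "egen j \<in> P" if j: "j < n" for j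
  proof -
    let ?s = "\<lambda>f::mono \<Rightarrow> 'k. \<lambda>m. f (pmsw i j m)"
    have "?s \<in> Gn n" by (rule swap_aut[OF i(1) j])
    hence "?s ` P = P" using inv by blast
    moreover have "?s (egen i) = egen j" by (rule swap_egen)
    ultimately show ?thesis using i(2) by (metis image_eqI)
  qed
  thus ?thesis by (intro aideal_min[OF IP]) auto
qed

lemma two_pow_eq_one: "(2::'k::field_char_0) ^ k = 1 \<Longrightarrow> k = 0"
proof -
  assume "(2::'k) ^ k = 1"
  hence "(of_nat (2 ^ k) :: 'k) = of_nat 1" by simp
  hence "(2::nat) ^ k = 1" by (simp only: of_nat_eq_iff)
  thus "k = 0" by simp
qed

lemma two_powi_inj: assumes "(2::'k::field_char_0) powi a = 2 powi b" shows "a = b"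
proof (rule ccontr)
  assume ne: "a \<noteq> b"
  { fix a b :: int assume lt: "a < b" and e: "(2::'k) powi a = 2 powi b"
    have "(2::'k) powi b = 2 powi a * 2 powi (b - a)" by (simp add: power_int_add[symmetric])
    also have "(2::'k) powi (b - a) = 2 ^ nat (b - a)" using lt by (simp add: power_int_def)
    finally have "(2::'k) ^ nat (b - a) = 1" using e by (simp add: power_int_not_zero)
    hence False using two_pow_eq_one lt by fastforce }
  thus False using ne assms by (metis linorder_neqE)
qed

lemma lookup_phi_gen:
  assumes "finite A" "supp f \<subseteq> A"
  shows "Poly_Mapping.lookup (phi n f) e = (\<Sum>m\<in>A. if dd n m = e then f m else 0)"
  unfolding phi_eq[OF assms] lookup_sum by (simp add: lookup_single when_def)

lemma keys_phi: assumes "finite (supp f)" "d \<in> Poly_Mapping.keys (phi n f)" shows "\<exists>m\<in>supp f. dd n m = d"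
proof (rule ccontr)
  assume "\<not> ?thesis"
  hence "Poly_Mapping.lookup (phi n f) d = 0" unfolding lookup_phi[OF assms(1)] by (intro sum.neutral) auto
  thus False using assms(2) by (simp add: in_keys_iff)
qed

lemma P_sub_aideal:
  fixes P :: "(mono \<Rightarrow> 'k::field_char_0) set"
  assumes P: "is_prime_ideal n P" and A: "aideal n \<subseteq> P"
    and inv: "\<forall>\<sigma>\<in>(Gn n :: ((mono \<Rightarrow> 'k) \<Rightarrow> _) set). \<sigma> ` P = P"
  shows "P \<subseteq> aideal n"
proof (rule ccontr)
  assume "\<not> P \<subseteq> aideal n"
  then obtain f where f: "f \<in> P" "f \<notin> aideal n" by blast
  have IP: "is_ideal n P" using P by (simp add: is_prime_ideal_def)
  have PS: "P \<noteq> Sn n" using P by (simp add: is_prime_ideal_def)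
  have PSn: "\<And>g. g \<in> P \<Longrightarrow> g \<in> Sn n" using IP ideal_sub by blast
  have "phi n f \<noteq> 0" using f ker_aideal PSn by blast
  hence ex: "\<exists>g. g \<in> P \<and> phi n g \<noteq> 0" using f by blast
  obtain g where g: "g \<in> P" "phi n g \<noteq> 0"
    and gmin: "\<And>g'. g' \<in> P \<and> phi n g' \<noteq> 0 \<Longrightarrow> card (Poly_Mapping.keys (phi n g)) \<le> card (Poly_Mapping.keys (phi n g'))"
    using ex_has_least_nat[of "\<lambda>g. g \<in> P \<and> phi n g \<noteq> 0" _ "\<lambda>g. card (Poly_Mapping.keys (phi n g))"] ex by blast
  have gS: "g \<in> Sn n" using g PSn by blast
  have fg: "finite (supp g)" using gS by (simp add: Sn_fin)
  have kne: "Poly_Mapping.keys (phi n g) \<noteq> {}" using g(2) by simp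
  show False
  proof (cases "\<exists>d d'. d \<in> Poly_Mapping.keys (phi n g) \<and> d' \<in> Poly_Mapping.keys (phi n g) \<and> d \<noteq> d'")
    case True
    then obtain d d' where dd: "d \<in> Poly_Mapping.keys (phi n g)" "d' \<in> Poly_Mapping.keys (phi n g)" "d \<noteq> d'" by blast
    have "\<exists>i. Poly_Mapping.lookup d i \<noteq> Poly_Mapping.lookup d' i"
    proof (rule ccontr)
      assume "\<not> ?thesis"
      hence "d = d'" by (intro poly_mapping_eqI) auto
      thus False using dd(3) by simp
    qed
    then obtain i where di: "Poly_Mapping.lookup d i \<noteq> Poly_Mapping.lookup d' i" by blast
    obtain m1 where m1: "m1 \<in> supp g" "dd n m1 = d" using keys_phi[OF fg dd(1)] by blast
    obtain m2 where m2: "m2 \<in> supp g" "dd n m2 = d'" using keys_phi[OF fg dd(2)] by blast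
    have i: "i < n"
    proof (rule ccontr)
      assume "\<not> i < n"
      hence "Poly_Mapping.lookup (dd n m1) i = 0" "Poly_Mapping.lookup (dd n m2) i = 0"
        by (simp_all add: lookup_dd)
      thus False using di m1(2) m2(2) by simp
    qed
    define \<tau> where "\<tau> = (\<lambda>f::mono \<Rightarrow> 'k. \<lambda>m. tor i 2 m * f m)"
    have tG: "\<tau> \<in> Gn n" unfolding \<tau>_def by (rule tor_aut) simp
    have tgP: "\<tau> g \<in> P" using inv tG g(1) by blast
    define c :: 'k where "c = 2 powi (Poly_Mapping.lookup d i)"
    define h where "h = sadd (\<tau> g) (sneg (sscale c g))"
    have hP: "h \<in> P" unfolding h_def by (intro ideal_add[OF IP tgP] ideal_neg[OF IP] ideal_scale[OF IP g(1)])
    have sh: "supp h \<subseteq> supp g" by (auto simp: h_def supp_def sadd_def sneg_def sscale_def \<tau>_def)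
    have lh: "Poly_Mapping.lookup (phi n h) e = (2 powi (Poly_Mapping.lookup e i) - c) * Poly_Mapping.lookup (phi n g) e" for e
    proof -
      have "Poly_Mapping.lookup (phi n h) e = (\<Sum>m\<in>supp g. if dd n m = e then h m else 0)"
        by (rule lookup_phi_gen[OF fg sh])
      also have "\<dots> = (\<Sum>m\<in>supp g. (2 powi (Poly_Mapping.lookup e i) - c) * (if dd n m = e then g m else 0))"
      proof (rule sum.cong[OF refl])
        fix m
        show "(if dd n m = e then h m else 0) = (2 powi (Poly_Mapping.lookup e i) - c) * (if dd n m = e then g m else 0)"
        proof (cases "dd n m = e")
          case True
          hence T: "tor i 2 m = (2::'k) powi (Poly_Mapping.lookup e i)"
            using i by (auto simp: tor_def lookup_dd)
          show ?thesis using True by (simp add: h_def \<tau>_def sadd_def sneg_def sscale_def T algebra_simps)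
        qed simp
      qed
      also have "\<dots> = (2 powi (Poly_Mapping.lookup e i) - c) * Poly_Mapping.lookup (phi n g) e"
        by (simp add: sum_distrib_left[symmetric] lookup_phi fg)
      finally show ?thesis .
    qed
    have sub: "Poly_Mapping.keys (phi n h) \<subseteq> Poly_Mapping.keys (phi n g) - {d}"
    proof
      fix e assume "e \<in> Poly_Mapping.keys (phi n h)"
      hence "(2 powi (Poly_Mapping.lookup e i) - c) * Poly_Mapping.lookup (phi n g) e \<noteq> 0"
        using lh[of e] by (simp add: in_keys_iff)
      hence "Poly_Mapping.lookup (phi n g) e \<noteq> 0" "e \<noteq> d" by (auto simp: c_def)
      thus "e \<in> Poly_Mapping.keys (phi n g) - {d}" by (simp add: in_keys_iff)
    qed
    have "Poly_Mapping.lookup (phi n h) d' \<noteq> 0"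
    proof -
      have "(2::'k) powi (Poly_Mapping.lookup d' i) \<noteq> c"
        using two_powi_inj[where 'k='k, of "Poly_Mapping.lookup d' i" "Poly_Mapping.lookup d i"] di by (auto simp: c_def)
      thus ?thesis using lh dd(2) by (simp add: in_keys_iff)
    qed
    hence hnz: "phi n h \<noteq> 0" by auto
    have "card (Poly_Mapping.keys (phi n h)) \<le> card (Poly_Mapping.keys (phi n g) - {d})" by (rule card_mono) (use sub in auto)
    also have "\<dots> < card (Poly_Mapping.keys (phi n g))"
      using dd(1) card_gt_0_iff[of "Poly_Mapping.keys (phi n g)"] by (auto simp: card_Diff1_less)
    finally show False using gmin[of h] hP hnz by simp
  next
    case False
    then obtain d where kd: "Poly_Mapping.keys (phi n g) = {d}" using kne by blast
    define c where "c = Poly_Mapping.lookup (phi n g) d"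
    have cnz: "c \<noteq> 0" using kd by (simp add: c_def in_keys_iff[symmetric])
    have pg: "phi n g = Poly_Mapping.single d c"
    proof (rule poly_mapping_eqI)
      fix e show "Poly_Mapping.lookup (phi n g) e = Poly_Mapping.lookup (Poly_Mapping.single d c) e"
      proof (cases "e = d")
        case True thus ?thesis by (simp add: c_def)
      next
        case False
        hence "e \<notin> Poly_Mapping.keys (phi n g)" using kd by auto
        thus ?thesis using False by (simp add: in_keys_iff lookup_single when_def)
      qed
    qed
    obtain m0 where m0: "m0 \<in> supp g" "dd n m0 = d" using keys_phi[OF fg] kd by blast
    have vm0: "m0 \<in> valid_monos n" using m0 gS by (auto simp: Sn_iff)
    define rm where "rm = red m0"
    have vrm: "rm \<in> valid_monos n" using red_valid[OF vm0] by (simp add: rm_def)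
    have ddrm: "dd n rm = d"
      unfolding m0(2)[symmetric] rm_def
    proof (rule poly_mapping_eqI)
      fix j
      have "int (a - b) - int (b - a) = int a - int b" for a b :: nat
        by (cases "a \<le> b") (simp_all add: of_nat_diff)
      thus "Poly_Mapping.lookup (dd n (red m0)) j = Poly_Mapping.lookup (dd n m0) j"
        by (simp add: lookup_dd red_def)
    qed
    define M where "M = (mon rm :: mono \<Rightarrow> 'k)"
    have MS: "M \<in> Sn n" by (simp add: M_def Sn_mon vrm)
    have pM: "phi n (sscale c M) = Poly_Mapping.single d c"
    proof -
      have "phi n (sscale c M) = (\<Sum>m\<in>{rm}. Poly_Mapping.single (dd n m) (sscale c M m))"
        by (rule phi_eq) (auto simp: M_def supp_def sscale_def mon_def)
      thus ?thesis by (simp add: ddrm sscale_def M_def mon_def)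
    qed
    define g2 where "g2 = sadd g (sneg (sscale c M))"
    have g2S: "g2 \<in> Sn n" by (simp add: g2_def Sn_sadd Sn_sneg Sn_sscale gS MS)
    have "phi n g2 = phi n g + phi n (sneg (sscale c M))"
      unfolding g2_def by (rule phi_add) (simp_all add: Sn_fin[OF gS] Sn_fin[OF Sn_sscale[OF MS]])
    also have "\<dots> = 0" by (simp add: phi_neg pg pM)
    finally have "phi n g2 = 0" .
    hence "g2 \<in> aideal n" using ker_aideal g2S by blast
    hence g2P: "g2 \<in> P" using A by blast
    have "sadd g (sneg g2) = sscale c M" by (simp add: g2_def sadd_def sneg_def sscale_def fun_eq_iff)
    moreover have "sadd g (sneg g2) \<in> P" by (intro ideal_add[OF IP g(1)] ideal_neg[OF IP g2P])
    ultimately have "sscale c M \<in> P" by simp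
    hence "sscale (inverse c) (sscale c M) \<in> P" by (rule ideal_scale[OF IP])
    moreover have "sscale (inverse c) (sscale c M) = M" using cnz by (simp add: sscale_def fun_eq_iff)
    ultimately have MP: "M \<in> P" by simp
    define yl :: mono where "yl = ((\<lambda>j. 0), fst rm)"
    define xr :: mono where "xr = (snd rm, (\<lambda>j. 0))"
    have vl: "yl \<in> valid_monos n" "xr \<in> valid_monos n" using vrm by (auto simp: yl_def xr_def valid_monos_def)
    have "bmul (bmul yl rm) xr = u0"
      by (simp add: bmul_def yl_def xr_def u0_def)
    hence "smult (smult (mon yl) M) (mon xr) = sone"
      by (simp add: M_def smult_mon_mon sone_mon)
    moreover have "smult (smult (mon yl) M) (mon xr) \<in> P"
      by (rule ideal_multr[OF IP Sn_mon[OF vl(2)]], rule ideal_multl[OF IP Sn_mon[OF vl(1)] MP])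
    ultimately have "sone \<in> P" by simp
    hence "P = Sn n" by (rule ideal_sone[OF IP])
    thus False using PS by simp
  qed
qed

theorem theorem9p8:
  fixes n :: nat and P :: "(mono \<Rightarrow> 'k::field_char_0) set"
  assumes "n \<ge> 1"
  shows "(is_prime_ideal n P \<and> P \<noteq> {szero} \<and> (\<forall>\<sigma>\<in>(Gn n :: ((mono \<Rightarrow> 'k) \<Rightarrow> _) set). \<sigma> ` P = P))
         \<longleftrightarrow> P = aideal n"
proof
  assume H: "is_prime_ideal n P \<and> P \<noteq> {szero} \<and> (\<forall>\<sigma>\<in>(Gn n :: ((mono \<Rightarrow> 'k) \<Rightarrow> _) set). \<sigma> ` P = P)"
  have A: "aideal n \<subseteq> P" using aideal_sub_P H by blast
  moreover have "P \<subseteq> aideal n" using P_sub_aideal[OF _ A] H by blast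
  ultimately show "P = aideal n" by blast
next
  assume PA: "P = aideal n"
  have n0: "0 < n" using assms by simp
  have "egen 0 \<in> (aideal n :: (mono \<Rightarrow> 'k) set)" by (rule egen_aideal[OF n0])
  moreover have "(egen 0 :: mono \<Rightarrow> 'k) \<noteq> szero"
  proof
    assume "(egen 0 :: mono \<Rightarrow> 'k) = szero"
    hence "(egen 0 :: mono \<Rightarrow> 'k) u0 = 0" by (simp add: szero_def)
    moreover have "(dlt 0, dlt 0) \<noteq> u0" by (auto simp: dlt_def u0_def fun_eq_iff)
    ultimately show False by (simp add: egen_explicit)
  qed
  ultimately have nz: "P \<noteq> {szero}" using PA by auto
  have "\<forall>\<sigma>\<in>(Gn n :: ((mono \<Rightarrow> 'k) \<Rightarrow> _) set). \<sigma> ` P = P"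
    using G_aideal PA by blast
  thus "is_prime_ideal n P \<and> P \<noteq> {szero} \<and> (\<forall>\<sigma>\<in>(Gn n :: ((mono \<Rightarrow> 'k) \<Rightarrow> _) set). \<sigma> ` P = P)"
    using aideal_prime nz PA by simp
qed

end
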